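(* Let $d\ge 3$. In every model of $\mathsf{SR}$, for any inertial observers $m$ and $k$, the worldview transformation $\mathsf{w}_{mk}$ is a Poincaré transformation of $Q^d$.
   Context: Language: two-sorted first-order language with sorts $B$ (bodies), $Q$ (quantities), unary $\mathsf{IOb}$ on $B$, binary $\mathsf{Ph}$ on $B$, operations $+,\cdot$ and relation $\le$ on $Q$, and $(d+2)$-ary $\mathsf{W}$ (first two arguments of sort $B$, rest of sort $Q$). $\mathsf{time}(\bar x,\bar y)=x_1-y_1$, $\mathsf{space}^2(\bar x,\bar y)=\sum_{i=2}^d(x_i-y_i)^2$. Write $\mathsf{ev}_m(\bar x)=\mathsf{ev}_k(\bar y)$ for $\forall b[\mathsf{W}(m,b,\bar x)\leftrightarrow\mathsf{W}(k,b,\bar y)]$. $\mathsf{SR}=\mathsf{SPR}^++\mathsf{AxLight}+\mathsf{AxOField}+\mathsf{AxEv}+\mathsf{AxSelf}+\mathsf{AxSymD}$, where: $\mathsf{SPR}^+$: for every formula $\varphi(h,\bar x)$ with at most one free variable $h$ of sort $B$, $\forall m k\bar x[\mathsf{IOb}(m)\land\mathsf{IOb}(k)\to(\varphi(m,\bar x)\leftrightarrow\varphi(k,\bar x))]$. $\mathsf{AxLight}$: $\exists m\,c\,[\mathsf{IOb}(m)\land c>0\land\forall\bar x\bar y\,(\exists p b[\mathsf{Ph}(p,b)\land\mathsf{W}(m,p,\bar x)\land\mathsf{W}(m,p,\bar y)]\leftrightarrow \mathsf{space}^2(\bar x,\bar y)=c^2\mathsf{time}(\bar x,\bar y)^2)]$.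 $\mathsf{AxOField}$: $\langle Q,+,\cdot,\le\rangle$ is an ordered field. $\mathsf{AxEv}$: $\mathsf{IOb}(m)\land\mathsf{IOb}(k)\to\exists\bar y\,\mathsf{ev}_m(\bar x)=\mathsf{ev}_k(\bar y)$ (for all $m,k,\bar x$). $\mathsf{AxSelf}$: $\mathsf{IOb}(m)\to\forall\bar x[\mathsf{W}(m,m,\bar x)\leftrightarrow x_2=\dots=x_d=0]$. $\mathsf{AxSymD}$: (i) if $\mathsf{IOb}(m),\mathsf{IOb}(k)$, $x_1=y_1$, $x'_1=y'_1$, $\mathsf{ev}_m(\bar x)=\mathsf{ev}_k(\bar x')$ and $\mathsf{ev}_m(\bar y)=\mathsf{ev}_k(\bar y')$, then $\mathsf{space}^2(\bar x,\bar y)=\mathsf{space}^2(\bar x',\bar y')$; (ii) $\mathsf{IOb}(m)\to\exists pb[\mathsf{Ph}(p,b)\land\mathsf{W}(m,p,0,\dots,0)\land\mathsf{W}(m,p,1,1,0,\dots,0)]$. Worldview transformation: $\mathsf{w}_{mk}=\{\langle\bar x,\bar y\rangle\in Q^d\times Q^d:\forall b[\mathsf{W}(m,b,\bar x)\leftrightarrow\mathsf{W}(k,b,\bar y)]\}$. A Poincaré transformation is an affine bijection $P:Q^d\to Q^d$ such that $\mathsf{time}(\bar x,\bar y)^2-\mathsf{space}^2(\bar x,\bar y)=\mathsf{time}(P\bar x,P\bar y)^2-\mathsf{space}^2(P\bar x,P\bar y)$ for all $\bar x,\bar y$. *)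

theory Defs
  imports Main
begin

(* Coordinates: a point of Q^d is a list of length d; index 0 is time,
   indices 1..d-1 are space coordinates (paper's x_1 .. x_d). *)

datatype qterm = QVar nat | QAdd qterm qterm | QMul qterm qterm

(* Formulas. Body variables and quantity variables are separate nat-indexed
   families. Neg/Conj/ExB/ExQ form a complete basis; others are definable. *)
datatype form =
    FFalse
  | BEq nat nat
  | QEq qterm qterm
  | QLe qterm qterm
  | IObA nat
  | PhA nat nat
  | WA nat nat "qterm list"
  | Neg form
  | Conj form form
  | ExB nat form
  | ExQ nat form

primrec evalq :: "(nat \<Rightarrow> 'q::{plus,times}) \<Rightarrow> qterm \<Rightarrow> 'q" where
  "evalq e (QVar n) = e n"
| "evalq e (QAdd s t) = evalq e s + evalq e t"
| "evalq e (QMul s t) = evalq e s * evalq e t"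

primrec sat :: "('b \<Rightarrow> bool) \<Rightarrow> ('b \<Rightarrow> 'b \<Rightarrow> bool) \<Rightarrow> ('b \<Rightarrow> 'b \<Rightarrow> 'q list \<Rightarrow> bool)
    \<Rightarrow> (nat \<Rightarrow> 'b) \<Rightarrow> (nat \<Rightarrow> 'q::{plus,times,ord}) \<Rightarrow> form \<Rightarrow> bool" where
  "sat IOb Ph W eb eq FFalse = False"
| "sat IOb Ph W eb eq (BEq i j) = (eb i = eb j)"
| "sat IOb Ph W eb eq (QEq s t) = (evalq eq s = evalq eq t)"
| "sat IOb Ph W eb eq (QLe s t) = (evalq eq s \<le> evalq eq t)"
| "sat IOb Ph W eb eq (IObA i) = IOb (eb i)"
| "sat IOb Ph W eb eq (PhA i j) = Ph (eb i) (eb j)"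
| "sat IOb Ph W eb eq (WA i j ts) = W (eb i) (eb j) (map (evalq eq) ts)"
| "sat IOb Ph W eb eq (Neg f) = (\<not> sat IOb Ph W eb eq f)"
| "sat IOb Ph W eb eq (Conj f g) = (sat IOb Ph W eb eq f \<and> sat IOb Ph W eb eq g)"
| "sat IOb Ph W eb eq (ExB n f) = (\<exists>b. sat IOb Ph W (eb(n := b)) eq f)"
| "sat IOb Ph W eb eq (ExQ n f) = (\<exists>q. sat IOb Ph W eb (eq(n := q)) f)"

primrec wf_form :: "nat \<Rightarrow> form \<Rightarrow> bool" where
  "wf_form d FFalse = True"
| "wf_form d (BEq i j) = True"
| "wf_form d (QEq s t) = True"
| "wf_form d (QLe s t) = True"
| "wf_form d (IObA i) = True"
| "wf_form d (PhA i j) = True"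
| "wf_form d (WA i j ts) = (length ts = d)"
| "wf_form d (Neg f) = wf_form d f"
| "wf_form d (Conj f g) = (wf_form d f \<and> wf_form d g)"
| "wf_form d (ExB n f) = wf_form d f"
| "wf_form d (ExQ n f) = wf_form d f"

primrec fvB :: "form \<Rightarrow> nat set" where
  "fvB FFalse = {}"
| "fvB (BEq i j) = {i, j}"
| "fvB (QEq s t) = {}"
| "fvB (QLe s t) = {}"
| "fvB (IObA i) = {i}"
| "fvB (PhA i j) = {i, j}"
| "fvB (WA i j ts) = {i, j}"
| "fvB (Neg f) = fvB f"
| "fvB (Conj f g) = fvB f \<union> fvB g"
| "fvB (ExB n f) = fvB f - {n}"
| "fvB (ExQ n f) = fvB f"

definition time :: "'q::ab_group_add list \<Rightarrow> 'q list \<Rightarrow> 'q" where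
  "time x y = x ! 0 - y ! 0"

definition space2 :: "nat \<Rightarrow> 'q::comm_ring_1 list \<Rightarrow> 'q list \<Rightarrow> 'q" where
  "space2 d x y = (\<Sum>i\<in>{1..<d}. (x ! i - y ! i)^2)"

definition ev_eq :: "('b \<Rightarrow> 'b \<Rightarrow> 'q list \<Rightarrow> bool) \<Rightarrow> 'b \<Rightarrow> 'q list \<Rightarrow> 'b \<Rightarrow> 'q list \<Rightarrow> bool" where
  "ev_eq W m x k y = (\<forall>b. W m b x \<longleftrightarrow> W k b y)"

definition SPR_plus :: "nat \<Rightarrow> ('b \<Rightarrow> bool) \<Rightarrow> ('b \<Rightarrow> 'b \<Rightarrow> bool)
    \<Rightarrow> ('b \<Rightarrow> 'b \<Rightarrow> 'q::linordered_field list \<Rightarrow> bool) \<Rightarrow> bool" where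
  "SPR_plus d IOb Ph W =
    (\<forall>\<phi> h. wf_form d \<phi> \<and> fvB \<phi> \<subseteq> {h} \<longrightarrow>
       (\<forall>eb eq m k. IOb m \<and> IOb k \<longrightarrow>
          (sat IOb Ph W (eb(h := m)) eq \<phi> \<longleftrightarrow> sat IOb Ph W (eb(h := k)) eq \<phi>)))"

definition AxLight :: "nat \<Rightarrow> ('b \<Rightarrow> bool) \<Rightarrow> ('b \<Rightarrow> 'b \<Rightarrow> bool)
    \<Rightarrow> ('b \<Rightarrow> 'b \<Rightarrow> 'q::linordered_field list \<Rightarrow> bool) \<Rightarrow> bool" where
  "AxLight d IOb Ph W =
    (\<exists>m c. IOb m \<and> c > 0 \<and>
       (\<forall>x y. length x = d \<and> length y = d \<longrightarrow>
          ((\<exists>p b. Ph p b \<and> W m p x \<and> W m p y) \<longleftrightarrow> space2 d x y = c^2 * (time x y)^2)))"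

definition AxEv :: "nat \<Rightarrow> ('b \<Rightarrow> bool) \<Rightarrow> ('b \<Rightarrow> 'b \<Rightarrow> 'q list \<Rightarrow> bool) \<Rightarrow> bool" where
  "AxEv d IOb W =
    (\<forall>m k x. IOb m \<and> IOb k \<and> length x = d \<longrightarrow>
       (\<exists>y. length y = d \<and> ev_eq W m x k y))"

definition AxSelf :: "nat \<Rightarrow> ('b \<Rightarrow> bool) \<Rightarrow> ('b \<Rightarrow> 'b \<Rightarrow> 'q::zero list \<Rightarrow> bool) \<Rightarrow> bool" where
  "AxSelf d IOb W =
    (\<forall>m. IOb m \<longrightarrow> (\<forall>x. length x = d \<longrightarrow> (W m m x \<longleftrightarrow> (\<forall>i\<in>{1..<d}. x ! i = 0))))"

definition AxSymD :: "nat \<Rightarrow> ('b \<Rightarrow> bool) \<Rightarrow> ('b \<Rightarrow> 'b \<Rightarrow> bool)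
    \<Rightarrow> ('b \<Rightarrow> 'b \<Rightarrow> 'q::linordered_field list \<Rightarrow> bool) \<Rightarrow> bool" where
  "AxSymD d IOb Ph W =
    ((\<forall>m k x y x' y'. IOb m \<and> IOb k \<and>
        length x = d \<and> length y = d \<and> length x' = d \<and> length y' = d \<and>
        x ! 0 = y ! 0 \<and> x' ! 0 = y' ! 0 \<and>
        ev_eq W m x k x' \<and> ev_eq W m y k y' \<longrightarrow> space2 d x y = space2 d x' y')
     \<and> (\<forall>m. IOb m \<longrightarrow> (\<exists>p b. Ph p b \<and> W m p (replicate d 0)
                                   \<and> W m p (1 # 1 # replicate (d - 2) 0))))"

(* AxOField is captured by the type class linordered_field on 'q. *)
definition SR :: "nat \<Rightarrow> ('b \<Rightarrow> bool) \<Rightarrow> ('b \<Rightarrow> 'b \<Rightarrow> bool)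
    \<Rightarrow> ('b \<Rightarrow> 'b \<Rightarrow> 'q::linordered_field list \<Rightarrow> bool) \<Rightarrow> bool" where
  "SR d IOb Ph W = (SPR_plus d IOb Ph W \<and> AxLight d IOb Ph W \<and> AxEv d IOb W
                    \<and> AxSelf d IOb W \<and> AxSymD d IOb Ph W)"

definition wvt :: "nat \<Rightarrow> ('b \<Rightarrow> 'b \<Rightarrow> 'q list \<Rightarrow> bool) \<Rightarrow> 'b \<Rightarrow> 'b \<Rightarrow> ('q list \<times> 'q list) set" where
  "wvt d W m k = {(x, y). length x = d \<and> length y = d \<and> ev_eq W m x k y}"

definition affine_map :: "nat \<Rightarrow> ('q::comm_ring_1 list \<Rightarrow> 'q list) \<Rightarrow> bool" where
  "affine_map d P =
    (\<exists>(A :: nat \<Rightarrow> nat \<Rightarrow> 'q) (c :: nat \<Rightarrow> 'q). \<forall>x. length x = d \<longrightarrow>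
        P x = map (\<lambda>i. c i + (\<Sum>j<d. A i j * x ! j)) [0..<d])"

definition poincare :: "nat \<Rightarrow> ('q::linordered_field list \<Rightarrow> 'q list) \<Rightarrow> bool" where
  "poincare d P =
    (affine_map d P \<and> bij_betw P {x. length x = d} {x. length x = d} \<and>
     (\<forall>x y. length x = d \<and> length y = d \<longrightarrow>
        (time x y)^2 - space2 d x y = (time (P x) (P y))^2 - space2 d (P x) (P y)))"

end

theory Submission
  imports Defs "HOL-Library.Function_Algebras"
begin

lemma sum_fun_apply: "finite A \<Longrightarrow> (\<Sum>i\<in>A. f i) x = (\<Sum>i\<in>A. f i x)"
  by (induction A rule: finite_induct) auto

locale VS =
  fixes d :: nat
  assumes d3: "3 \<le> d"
begin

definition VV :: "(nat \<Rightarrow> 'q::linordered_field) set" where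
  "VV = {x. \<forall>i\<ge>d. x i = 0}"

definition sc :: "'q::linordered_field \<Rightarrow> (nat \<Rightarrow> 'q) \<Rightarrow> nat \<Rightarrow> 'q" where
  "sc t x = (\<lambda>i. t * x i)"

definition BB :: "(nat \<Rightarrow> 'q::linordered_field) \<Rightarrow> (nat \<Rightarrow> 'q) \<Rightarrow> 'q" where
  "BB x y = x 0 * y 0 - (\<Sum>i\<in>{1..<d}. x i * y i)"

definition mu :: "(nat \<Rightarrow> 'q::linordered_field) \<Rightarrow> 'q" where
  "mu x = BB x x"

definition ee :: "nat \<Rightarrow> nat \<Rightarrow> 'q::linordered_field" where
  "ee j = (\<lambda>i. if i = j then 1 else 0)"

definition nn :: "nat \<Rightarrow> 'q::linordered_field \<Rightarrow> nat \<Rightarrow> 'q" where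
  "nn j s = ee 0 + sc s (ee j)"

lemma sc_apply[simp]: "sc t x i = t * x i" by (simp add: sc_def)
lemma ee_apply[simp]: "ee j i = (if i = j then 1 else 0)" by (simp add: ee_def)

lemma VV_iff: "x \<in> VV \<longleftrightarrow> (\<forall>i\<ge>d. x i = 0)" by (simp add: VV_def)

lemma VV_add[simp,intro]: "x \<in> VV \<Longrightarrow> y \<in> VV \<Longrightarrow> x + y \<in> VV" by (simp add: VV_def)
lemma VV_diff[simp,intro]: "x \<in> VV \<Longrightarrow> y \<in> VV \<Longrightarrow> x - y \<in> VV" by (simp add: VV_def)
lemma VV_uminus[simp,intro]: "x \<in> VV \<Longrightarrow> - x \<in> VV" by (simp add: VV_def)
lemma VV_sc[simp,intro]: "x \<in> VV \<Longrightarrow> sc t x \<in> VV" by (simp add: VV_def)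
lemma VV_zero[simp,intro]: "0 \<in> VV" by (simp add: VV_def)
lemma VV_ee[simp,intro]: "j < d \<Longrightarrow> ee j \<in> VV" by (simp add: VV_def)
lemma VV_nn[simp,intro]: "j < d \<Longrightarrow> nn j s \<in> VV" using d3 by (simp add: nn_def)
lemma VV_sum[intro]: "(\<And>i. i \<in> A \<Longrightarrow> f i \<in> VV) \<Longrightarrow> sum f A \<in> VV"
  by (induction A rule: infinite_finite_induct) auto

lemma VV_eqI: "x \<in> VV \<Longrightarrow> y \<in> VV \<Longrightarrow> (\<And>i. i < d \<Longrightarrow> x i = y i) \<Longrightarrow> x = y"
proof (rule ext)
  fix i assume x: "x \<in> VV" and y: "y \<in> VV" and h: "\<And>i. i < d \<Longrightarrow> x i = y i"
  show "x i = y i"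
  proof (cases "i < d")
    case True then show ?thesis using h by simp
  next
    case False then show ?thesis using x y by (simp add: VV_def)
  qed
qed

lemma sc_one[simp]: "sc 1 x = x" by (simp add: sc_def)
lemma sc_zero[simp]: "sc 0 x = 0" by (simp add: sc_def zero_fun_def)
lemma sc_zero2[simp]: "sc t 0 = 0" by (simp add: sc_def zero_fun_def)
lemma sc_mult: "sc (s * t) x = sc s (sc t x)" by (simp add: sc_def mult.assoc)
lemma sc_add1: "sc (s + t) x = sc s x + sc t x" by (rule ext) (simp add: algebra_simps)
lemma sc_add2: "sc t (x + y) = sc t x + sc t y" by (rule ext) (simp add: algebra_simps)
lemma sc_diff1: "sc (s - t) x = sc s x - sc t x" by (rule ext) (simp add: algebra_simps)
lemma sc_diff2: "sc t (x - y) = sc t x - sc t y" by (rule ext) (simp add: algebra_simps)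
lemma sc_minus1: "sc (- t) x = - sc t x" by (rule ext) simp
lemma sc_minus2: "sc t (- x) = - sc t x" by (rule ext) simp
lemma sc_neg1[simp]: "sc (-1) x = - x" by (rule ext) simp
lemmas sc_simps = sc_mult sc_add1 sc_add2 sc_diff1 sc_diff2 sc_minus1 sc_minus2

lemma BB_add1: "BB (x + y) z = BB x z + BB y z"
  by (simp add: BB_def algebra_simps sum.distrib)
lemma BB_add2: "BB z (x + y) = BB z x + BB z y"
  by (simp add: BB_def algebra_simps sum.distrib)
lemma BB_diff1: "BB (x - y) z = BB x z - BB y z"
  by (simp add: BB_def algebra_simps sum_subtractf)
lemma BB_diff2: "BB z (x - y) = BB z x - BB z y"
  by (simp add: BB_def algebra_simps sum_subtractf)
lemma BB_minus1: "BB (- x) z = - BB x z"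
  by (simp add: BB_def algebra_simps sum_negf)
lemma BB_minus2: "BB z (- x) = - BB z x"
  by (simp add: BB_def algebra_simps sum_negf)
lemma BB_sc1: "BB (sc t x) z = t * BB x z"
  by (simp add: BB_def algebra_simps sum_distrib_left)
lemma BB_sc2: "BB z (sc t x) = t * BB z x"
  by (simp add: BB_def algebra_simps sum_distrib_left)
lemma BB_zero1[simp]: "BB 0 z = 0" by (simp add: BB_def)
lemma BB_zero2[simp]: "BB z 0 = 0" by (simp add: BB_def)
lemma BB_sym: "BB x y = BB y x" by (simp add: BB_def mult.commute)
lemmas BB_lin = BB_add1 BB_add2 BB_diff1 BB_diff2 BB_minus1 BB_minus2 BB_sc1 BB_sc2

lemma BB_ee0[simp]: "BB x (ee 0) = x 0"
  by (simp add: BB_def)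
lemma BB_ee0'[simp]: "BB (ee 0) x = x 0"
  by (simp add: BB_def)
lemma BB_eej[simp]: "1 \<le> j \<Longrightarrow> j < d \<Longrightarrow> BB x (ee j) = - x j"
  by (simp add: BB_def if_distrib cong: if_cong)
lemma BB_eej'[simp]: "1 \<le> j \<Longrightarrow> j < d \<Longrightarrow> BB (ee j) x = - x j"
  using BB_eej[of j x] by (simp add: BB_sym)

lemma mu_add: "mu (x + y) = mu x + 2 * BB x y + mu y"
  by (simp add: mu_def BB_lin BB_sym[of y x])
lemma mu_diff: "mu (x - y) = mu x - 2 * BB x y + mu y"
  by (simp add: mu_def BB_lin BB_sym[of y x])
lemma mu_sc: "mu (sc t x) = t^2 * mu x"
  by (simp add: mu_def BB_lin power2_eq_square)
lemma mu_minus: "mu (- x) = mu x"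
  by (simp add: mu_def BB_lin)
lemma mu_zero[simp]: "mu 0 = 0" by (simp add: mu_def)

end

context VS
begin

lemma mu_expand: "mu x = (x 0)^2 - (\<Sum>i\<in>{1..<d}. (x i)^2)"
  by (simp add: mu_def BB_def power2_eq_square)

lemma spatial_sq_zero:
  assumes "x \<in> VV" "x 0 = 0" "(\<Sum>i\<in>{1..<d}. (x i)^2) = 0"
  shows "x = 0"
proof (rule VV_eqI)
  show "x \<in> VV" by fact
  show "0 \<in> VV" by simp
  fix i assume "i < d"
  show "x i = 0 i"
  proof (cases "i = 0")
    case True then show ?thesis using assms by simp
  next
    case False
    then have "i \<in> {1..<d}" using \<open>i < d\<close> by auto
    then have "(x i)^2 = 0" using assms(3) sum_nonneg_eq_0_iff[of "{1..<d}" "\<lambda>i. (x i)^2"] by auto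
    then show ?thesis by simp
  qed
qed

lemma null_time0: "x \<in> VV \<Longrightarrow> x 0 = 0 \<Longrightarrow> mu x = 0 \<Longrightarrow> x = 0"
  using spatial_sq_zero[of x] by (simp add: mu_expand)

lemma spatial_neg:
  assumes "x \<in> VV" "x 0 = 0" "x \<noteq> 0"
  shows "mu x < 0"
proof -
  have "(\<Sum>i\<in>{1..<d}. (x i)^2) \<ge> 0" by (simp add: sum_nonneg)
  moreover have "(\<Sum>i\<in>{1..<d}. (x i)^2) \<noteq> 0" using spatial_sq_zero[of x] assms by auto
  ultimately show ?thesis using assms by (simp add: mu_expand)
qed

lemma null_nonzero_time:
  assumes "b \<in> VV" "mu b = 0" "b \<noteq> 0"
  shows "b 0 \<noteq> 0"
  using null_time0[of b] assms by auto

lemma null_par: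
  assumes a: "a \<in> VV" and b: "b \<in> VV" and ma: "mu a = 0" and mb: "mu b = 0"
    and ab: "BB a b = 0" and bnz: "b \<noteq> 0"
  shows "a = sc (a 0 / b 0) b"
proof -
  have b0: "b 0 \<noteq> 0" using null_nonzero_time[OF b mb bnz] .
  define r where "r = a 0 / b 0"
  define c where "c = a - sc r b"
  have cV: "c \<in> VV" using a b by (simp add: c_def)
  have c0: "c 0 = 0" using b0 by (simp add: c_def r_def)
  have "mu c = mu a - 2 * r * BB a b + r^2 * mu b"
    by (simp add: c_def mu_def BB_lin BB_sym[of b a] power2_eq_square algebra_simps)
  then have "mu c = 0" using ma mb ab by simp
  then have "c = 0" using null_time0[OF cV c0] by simp
  then show ?thesis by (simp add: c_def r_def)
qed

lemma null_par':
  assumes "a \<in> VV" "b \<in> VV" "mu a = 0" "mu b = 0" "BB a b = 0" "b \<noteq> 0"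
  shows "\<exists>t. a = sc t b"
  using null_par[OF assms] by blast

lemma light_line:
  assumes V: "a \<in> VV" "b \<in> VV" "x \<in> VV" and ab: "mu (b - a) = 0" "a \<noteq> b"
    and xa: "mu (x - a) = 0" and xb: "mu (x - b) = 0"
  shows "\<exists>t. x = a + sc t (b - a)"
proof -
  have "x - b = (x - a) - (b - a)" by simp
  then have "mu (x - b) = mu (x - a) - 2 * BB (x - a) (b - a) + mu (b - a)"
    by (simp only: mu_diff)
  then have "BB (x - a) (b - a) = 0" using xa xb ab by simp
  moreover have "b - a \<noteq> 0" using ab by simp
  ultimately obtain t where "x - a = sc t (b - a)"
    using null_par'[of "x - a" "b - a"] V xa ab by auto
  then show ?thesis by (metis add.commute diff_add_cancel)
qed

end

locale core = VS d for d +
  fixes F :: "(nat \<Rightarrow> 'q::linordered_field) \<Rightarrow> (nat \<Rightarrow> 'q)"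
  assumes F_V: "x \<in> VV \<Longrightarrow> F x \<in> VV"
    and F_inj: "x \<in> VV \<Longrightarrow> y \<in> VV \<Longrightarrow> F x = F y \<Longrightarrow> x = y"
    and F_surj: "z \<in> VV \<Longrightarrow> \<exists>x\<in>VV. F x = z"
    and F_light: "x \<in> VV \<Longrightarrow> y \<in> VV \<Longrightarrow> mu (F x - F y) = 0 \<longleftrightarrow> mu (x - y) = 0"
    and F_symd: "x \<in> VV \<Longrightarrow> y \<in> VV \<Longrightarrow> x 0 = y 0 \<Longrightarrow> F x 0 = F y 0 \<Longrightarrow> mu (F x - F y) = mu (x - y)"
begin

lemma para:
  assumes bV: "b \<in> VV" and uV: "u \<in> VV" and vV: "v \<in> VV"
    and mu0: "mu u = 0" and mv0: "mu v = 0" and uv: "BB u v \<noteq> 0"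
  shows "F (b + u + v) = F (b + u) + F (b + v) - F b"
proof -
  define P where "P = F b"
  define U where "U = F (b + u)"
  define Vv where "Vv = F (b + v)"
  define X where "X = F (b + u + v)"
  define u' where "u' = U - P"
  define x' where "x' = X - Vv"
  define v' where "v' = Vv - P"
  have PV: "P \<in> VV" and UV: "U \<in> VV" and VvV: "Vv \<in> VV" and XV: "X \<in> VV"
    using F_V bV uV vV by (auto simp: P_def U_def Vv_def X_def)
  have u'V: "u' \<in> VV" and x'V: "x' \<in> VV" and v'V: "v' \<in> VV"
    using PV UV VvV XV by (auto simp: u'_def x'_def v'_def)
  have unz: "u \<noteq> 0" using uv by auto
  have mu': "mu u' = 0"
    using F_light[of "b + u" b] bV uV mu0 by (simp add: u'_def U_def P_def)
  have mx': "mu x' = 0"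
  proof -
    have "b + u + v - (b + v) = u" by (simp add: algebra_simps)
    then show ?thesis using F_light[of "b + u + v" "b + v"] bV uV vV mu0 by (simp add: x'_def X_def Vv_def)
  qed
  have mv': "mu v' = 0"
    using F_light[of "b + v" b] bV vV mv0 by (simp add: v'_def Vv_def P_def)
  have mXU: "mu (X - U) = 0"
  proof -
    have "b + u + v - (b + u) = v" by (simp add: algebra_simps)
    then show ?thesis using F_light[of "b + u + v" "b + u"] bV uV vV mv0 by (simp add: U_def X_def)
  qed
  have muv: "mu (u - v) \<noteq> 0" using uv mu0 mv0 by (simp add: mu_diff)
  have mUV: "mu (U - Vv) \<noteq> 0"
  proof -
    have "b + u - (b + v) = u - v" by (simp add: algebra_simps)
    then show ?thesis using F_light[of "b + u" "b + v"] bV uV vV muv by (simp add: U_def Vv_def)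
  qed
  have u'nz: "u' \<noteq> 0"
  proof
    assume "u' = 0"
    then have "F (b + u) = F b" by (simp add: u'_def U_def P_def)
    then have "b + u = b" using F_inj bV uV by blast
    then show False using unz by simp
  qed
  have XVv: "X \<noteq> Vv"
  proof
    assume "X = Vv"
    then have "b + u + v = b + v" using F_inj[of "b + u + v" "b + v"] bV uV vV by (simp add: X_def Vv_def)
    moreover have "u = (b + u + v) - (b + v)" by (simp add: algebra_simps)
    ultimately have "u = 0" by simp
    then show False using unz by simp
  qed
  have Bux: "BB u' x' = 0"
  proof (rule ccontr)
    assume h: "BB u' x' \<noteq> 0"
    define w where "w = P - Vv"
    define s where "s = - BB w x' / BB u' x'"
    have s_prop: "BB w x' + s * BB u' x' = 0" using h by (simp add: s_def)
    define pt where "pt = P + sc s u'"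
    have ptV: "pt \<in> VV" using PV u'V by (simp add: pt_def)
    obtain p where pV: "p \<in> VV" and Fp: "F p = pt" using F_surj[OF ptV] by blast
    have "mu (F p - F b) = 0" using mu' by (simp add: Fp pt_def P_def[symmetric] mu_sc)
    then have pb: "mu (p - b) = 0" using F_light[of p b] pV bV by simp
    have "F p - F (b + u) = sc (s - 1) u'" by (simp add: Fp pt_def u'_def U_def[symmetric] sc_simps algebra_simps)
    then have "mu (F p - F (b + u)) = 0" using mu' by (simp add: mu_sc)
    then have pbu: "mu (p - (b + u)) = 0" using F_light[of p "b + u"] pV bV uV by simp
    obtain t where pt_eq: "p = b + sc t (b + u - b)"
      using light_line[of b "b + u" p] bV uV pV pb pbu mu0 unz by auto
    then have pt_eq': "p = b + sc t u" by simp
    define q where "q = b + v + sc t u"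
    have qV: "q \<in> VV" using bV uV vV by (simp add: q_def)
    have "p - q = - v" by (simp add: pt_eq' q_def algebra_simps)
    then have "mu (p - q) = 0" using mv0 by (simp add: mu_minus)
    then have FpFq: "mu (F p - F q) = 0" using F_light[of p q] pV qV by simp
    have "q - (b + v) = sc t u" by (simp add: q_def)
    then have "mu (q - (b + v)) = 0" using mu0 by (simp add: mu_sc)
    then have q1: "mu (F q - Vv) = 0" using F_light[of q "b + v"] qV bV vV by (simp add: Vv_def)
    have "q - (b + u + v) = sc (t - 1) u" by (simp add: q_def sc_simps algebra_simps)
    then have "mu (q - (b + u + v)) = 0" using mu0 by (simp add: mu_sc)
    then have q2: "mu (F q - X) = 0" using F_light[of q "b + u + v"] qV bV vV uV by (simp add: X_def)
    have FqV: "F q \<in> VV" using F_V qV by simp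
    obtain r where Fq: "F q = Vv + sc r (X - Vv)"
      using light_line[of Vv X "F q"] VvV XV FqV mx' XVv q1 q2 by (auto simp: x'_def)
    define K where "K = mu (w + sc s u')"
    have "F p - F q = (w + sc s u') - sc r x'"
      by (simp add: Fp Fq pt_def w_def x'_def algebra_simps)
    then have "mu (F p - F q) = K - 2 * r * BB (w + sc s u') x' + r^2 * mu x'"
      by (simp add: K_def mu_diff mu_sc BB_lin)
    also have "\<dots> = K" using s_prop mx' by (simp add: BB_lin)
    finally have K0: "K = 0" using FpFq by simp
    have "F p - Vv = w + sc s u'" by (simp add: Fp pt_def w_def algebra_simps)
    then have "mu (F p - F (b + v)) = 0" using K0 by (simp add: K_def Vv_def)
    then have pbv: "mu (p - (b + v)) = 0" using F_light[of p "b + v"] pV bV vV by simp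
    have "F p - X = (w + sc s u') - x'" by (simp add: Fp pt_def w_def x'_def algebra_simps)
    then have "mu (F p - X) = K - 2 * BB (w + sc s u') x' + mu x'"
      by (simp add: K_def mu_diff)
    also have "\<dots> = 0" using s_prop mx' K0 by (simp add: BB_lin)
    finally have "mu (F p - F (b + u + v)) = 0" by (simp add: X_def)
    then have pbuv: "mu (p - (b + u + v)) = 0" using F_light[of p "b + u + v"] pV bV vV uV by simp
    have e1: "p - (b + v) = sc t u - v" by (simp add: pt_eq' algebra_simps)
    have "mu (sc t u - v) = 0" using pbv unfolding e1 .
    then have "t * BB u v = 0" by (simp add: mu_diff mu_sc mu0 mv0 BB_lin)
    then have t0: "t = 0" using uv by simp
    have e2: "p - (b + u + v) = sc (t - 1) u - v" by (simp add: pt_eq' sc_simps algebra_simps)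
    have "mu (sc (t - 1) u - v) = 0" using pbuv unfolding e2 .
    then have "(t - 1) * BB u v = 0" by (simp add: mu_diff mu_sc mu0 mv0 BB_lin)
    then have "t = 1" using uv by simp
    then show False using t0 by simp
  qed
  then obtain \<alpha> where xa: "x' = sc \<alpha> u'"
    using null_par'[of x' u'] x'V u'V mx' mu' u'nz by (auto simp: BB_sym)
  have "X - U = v' + sc (\<alpha> - 1) u'"
    using xa by (simp add: x'_def u'_def v'_def sc_simps algebra_simps)
  then have "mu (v' + sc (\<alpha> - 1) u') = 0" using mXU by simp
  then have e1: "(\<alpha> - 1) * BB v' u' = 0" by (simp add: mu_add mu_sc mv' mu' BB_lin)
  have "U - Vv = u' - v'" by (simp add: u'_def v'_def)
  then have "mu (u' - v') \<noteq> 0" using mUV by simp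
  then have "BB v' u' \<noteq> 0" using mu' mv' by (simp add: mu_diff BB_sym)
  then have "\<alpha> = 1" using e1 by simp
  then have "X - Vv = u'" using xa by (simp add: x'_def)
  then have "X = Vv + u'" by (metis diff_add_cancel add.commute)
  then show ?thesis by (simp add: X_def U_def Vv_def P_def u'_def algebra_simps)
qed

end

context VS
begin

lemma decomp: "x \<in> VV \<Longrightarrow> x = (\<Sum>i<d. sc (x i) (ee i))"
proof (rule ext)
  fix j assume x: "x \<in> VV"
  have "(\<Sum>i<d. sc (x i) (ee i)) j = (\<Sum>i<d. x i * (if j = i then 1 else 0))"
    by (simp add: sum_fun_apply)
  also have "\<dots> = (\<Sum>i<d. if j = i then x i else 0)" by (rule sum.cong) auto
  also have "\<dots> = (if j < d then x j else 0)" by (simp add: sum.delta)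
  also have "\<dots> = x j" using x by (simp add: VV_def)
  finally show "x j = (\<Sum>i<d. sc (x i) (ee i)) j" by simp
qed

lemma sum_closed:
  assumes "\<And>x y. x \<in> S \<Longrightarrow> y \<in> S \<Longrightarrow> x + y \<in> S" "0 \<in> S" "\<And>i. i \<in> A \<Longrightarrow> f i \<in> S"
  shows "sum f A \<in> S"
  using assms(3)
proof (induction A rule: infinite_finite_induct)
  case (infinite A) then show ?case using assms by simp
next
  case empty then show ?case using assms by simp
next
  case (insert x F) then show ?case using assms by simp
qed

lemma BB_nn_nn: "1 \<le> i \<Longrightarrow> i < d \<Longrightarrow> 1 \<le> j \<Longrightarrow> j < d \<Longrightarrow>
    BB (nn i s) (nn j t) = 1 - (if i = j then s * t else 0)"
  by (simp add: nn_def BB_lin)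

lemma mu_nn: "1 \<le> j \<Longrightarrow> j < d \<Longrightarrow> s \<in> {1, -1} \<Longrightarrow> mu (nn j s) = 0"
  by (auto simp: mu_def BB_nn_nn)

lemma gen_all:
  assumes j0: "1 \<le> j0" "j0 < d" and s0: "s0 \<in> {1, -1}"
    and S0: "0 \<in> S" and Sadd: "\<And>x y. x \<in> S \<Longrightarrow> y \<in> S \<Longrightarrow> x + y \<in> S"
    and Sgen: "\<And>j s a. 1 \<le> j \<Longrightarrow> j < d \<Longrightarrow> s \<in> {1, -1} \<Longrightarrow> (j, s) \<noteq> (j0, s0) \<Longrightarrow> sc a (nn j s) \<in> S"
    and x: "x \<in> VV"
  shows "x \<in> S"
proof -
  define j1 where "j1 = (if j0 = 1 then 2 else (1::nat))"
  have j1: "1 \<le> j1" "j1 < d" "j1 \<noteq> j0" using d3 j0 by (auto simp: j1_def)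
  have e0: "sc c (ee 0) \<in> S" for c
  proof -
    have "sc c (ee 0) = sc (c/2) (nn j1 1) + sc (c/2) (nn j1 (-1))"
      using j1 by (auto simp: nn_def field_simps intro!: ext)
    then show ?thesis using Sadd Sgen j1 by auto
  qed
  have ej: "sc c (ee j) \<in> S" if "1 \<le> j" "j < d" for j c
  proof (cases "j = j0")
    case False
    have "sc c (ee j) = sc (c/2) (nn j 1) + sc (-c/2) (nn j (-1))"
      using that by (auto simp: nn_def field_simps intro!: ext)
    then show ?thesis using Sadd Sgen that False by auto
  next
    case True
    have ss: "s0 * s0 = 1" using s0 by auto
    have ne: "(j0, - s0) \<noteq> (j0, s0)" using s0 by auto
    have "sc c (ee j) = sc (- s0 * c) (nn j0 (- s0)) + sc (s0 * c) (ee 0)"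
    proof (rule ext)
      fix i
      show "sc c (ee j) i = (sc (- s0 * c) (nn j0 (- s0)) + sc (s0 * c) (ee 0)) i"
        using True j0 ss by (auto simp: nn_def algebra_simps)
    qed
    moreover have "- s0 \<in> {1, -1}" using s0 by auto
    ultimately show ?thesis using Sadd Sgen[of j0 "- s0"] e0 j0 ne True by auto
  qed
  have all: "sc c (ee i) \<in> S" if "i < d" for i c
    using e0 ej that by (cases "i = 0") auto
  have "(\<Sum>i<d. sc (x i) (ee i)) \<in> S"
    by (rule sum_closed) (use Sadd S0 all in auto)
  then show ?thesis using decomp[OF x] by simp
qed

end

context core
begin

lemma D_const:
  assumes j0: "1 \<le> j0" "j0 < d" and s0: "s0 \<in> {1, -1}" and c: "c \<noteq> 0"
  defines "u \<equiv> sc c (nn j0 s0)"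
  shows "w \<in> VV \<Longrightarrow> b \<in> VV \<Longrightarrow> F (b + w + u) - F (b + w) = F (b + u) - F b"
proof -
  define S where "S = {w \<in> VV. \<forall>b\<in>VV. F (b + w + u) - F (b + w) = F (b + u) - F b}"
  have uV: "u \<in> VV" using j0 by (simp add: u_def)
  have mu: "mu u = 0" using mu_nn[OF j0 s0] by (simp add: u_def mu_sc)
  have "0 \<in> S" by (simp add: S_def)
  moreover have "x + y \<in> S" if "x \<in> S" "y \<in> S" for x y
  proof -
    have "F (b + (x + y) + u) - F (b + (x + y)) = F (b + u) - F b" if bV: "b \<in> VV" for b
    proof -
      have "F ((b + x) + y + u) - F ((b + x) + y) = F (b + x + u) - F (b + x)"
        using \<open>y \<in> S\<close> \<open>x \<in> S\<close> bV by (auto simp: S_def)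
      also have "\<dots> = F (b + u) - F b" using \<open>x \<in> S\<close> bV by (auto simp: S_def)
      finally show ?thesis by (simp add: add.assoc)
    qed
    then show ?thesis using that by (auto simp: S_def)
  qed
  moreover have "sc a (nn j s) \<in> S" if j: "1 \<le> j" "j < d" and s: "s \<in> {1, -1}" and ne: "(j, s) \<noteq> (j0, s0)" for j s a
  proof (cases "a = 0")
    case True then show ?thesis by (simp add: S_def)
  next
    case False
    define z where "z = sc a (nn j s)"
    have zV: "z \<in> VV" using j by (simp add: z_def)
    have mz: "mu z = 0" using mu_nn[OF j s] by (simp add: z_def mu_sc)
    have "BB (nn j0 s0) (nn j s) \<noteq> 0"
      using j j0 s s0 ne by (auto simp: BB_nn_nn)
    then have Buz: "BB u z \<noteq> 0" using c False by (simp add: u_def z_def BB_lin)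
    have "F (b + z + u) - F (b + z) = F (b + u) - F b" if "b \<in> VV" for b
    proof -
      have "F (b + u + z) = F (b + u) + F (b + z) - F b"
        using para[OF that uV zV mu mz Buz] .
      moreover have "b + z + u = b + u + z" by (simp add: algebra_simps)
      ultimately show ?thesis by (simp add: algebra_simps)
    qed
    then show ?thesis using zV by (auto simp: S_def z_def)
  qed
  ultimately have "\<And>w. w \<in> VV \<Longrightarrow> w \<in> S" using gen_all[OF j0 s0, of S] by blast
  then show "w \<in> VV \<Longrightarrow> b \<in> VV \<Longrightarrow> F (b + w + u) - F (b + w) = F (b + u) - F b"
    by (auto simp: S_def)
qed

lemma F_transl: "b \<in> VV \<Longrightarrow> w \<in> VV \<Longrightarrow> F (b + w) - F b = F w - F 0"
proof -
  define T where "T = {w \<in> VV. \<forall>b\<in>VV. F (b + w) - F b = F w - F 0}"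
  have j0: "1 \<le> (1::nat)" "1 < d" using d3 by auto
  have "0 \<in> T" by (simp add: T_def)
  moreover have "x + y \<in> T" if "x \<in> T" "y \<in> T" for x y
  proof -
    have "F (b + (x + y)) - F b = F (x + y) - F 0" if bV: "b \<in> VV" for b
    proof -
      have xV: "x \<in> VV" and yV: "y \<in> VV" using that \<open>x \<in> T\<close> \<open>y \<in> T\<close> by (auto simp: T_def)
      have "F (b + (x + y)) - F b = (F ((b + x) + y) - F (b + x)) + (F (b + x) - F b)"
        by (simp add: add.assoc)
      also have "\<dots> = (F y - F 0) + (F x - F 0)" using \<open>x \<in> T\<close> \<open>y \<in> T\<close> bV xV
        by (auto simp: T_def)
      also have "\<dots> = (F (x + y) - F x) + (F x - F 0)" using \<open>y \<in> T\<close> xV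
        by (auto simp: T_def)
      also have "\<dots> = F (x + y) - F 0" by simp
      finally show ?thesis .
    qed
    then show ?thesis using that by (auto simp: T_def)
  qed
  moreover have "sc a (nn j s) \<in> T" if j: "1 \<le> j" "j < d" and s: "s \<in> {1, -1}" for j s a
  proof (cases "a = 0")
    case True then show ?thesis by (simp add: T_def)
  next
    case False
    have "F (b + sc a (nn j s)) - F b = F (sc a (nn j s)) - F 0" if "b \<in> VV" for b
      using D_const[OF j s False, of b 0] that by simp
    then show ?thesis using j by (auto simp: T_def)
  qed
  ultimately have "\<And>w. w \<in> VV \<Longrightarrow> w \<in> T" using gen_all[OF j0, of 1 T] by blast
  then show "b \<in> VV \<Longrightarrow> w \<in> VV \<Longrightarrow> F (b + w) - F b = F w - F 0"
    by (auto simp: T_def)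
qed

definition G where "G w = F w - F 0"

lemma G_V: "w \<in> VV \<Longrightarrow> G w \<in> VV" using F_V by (simp add: G_def)
lemma G_zero[simp]: "G 0 = 0" by (simp add: G_def)
lemma F_G: "b \<in> VV \<Longrightarrow> w \<in> VV \<Longrightarrow> F (b + w) = F b + G w"
  using F_transl[of b w] by (simp add: G_def algebra_simps)
lemma G_add: "x \<in> VV \<Longrightarrow> y \<in> VV \<Longrightarrow> G (x + y) = G x + G y"
  using F_G[of x y] by (simp add: G_def)
lemma G_minus: "x \<in> VV \<Longrightarrow> G (- x) = - G x"
proof -
  assume x: "x \<in> VV"
  have "G (x + - x) = G x + G (- x)" using G_add[of x "- x"] x by simp
  then have "G x + G (- x) = 0" by simp
  then show "G (- x) = - G x" by (simp add: eq_neg_iff_add_eq_0 add.commute)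
qed
lemma G_diff: "x \<in> VV \<Longrightarrow> y \<in> VV \<Longrightarrow> G (x - y) = G x - G y"
  using G_add[of x "- y"] G_minus[of y] by simp
lemma G_inj: "x \<in> VV \<Longrightarrow> y \<in> VV \<Longrightarrow> G x = G y \<Longrightarrow> x = y"
  using F_inj by (simp add: G_def)
lemma G_surj: "z \<in> VV \<Longrightarrow> \<exists>x\<in>VV. G x = z"
proof -
  assume z: "z \<in> VV"
  then have "z + F 0 \<in> VV" using F_V by simp
  then obtain x where "x \<in> VV" "F x = z + F 0" using F_surj by blast
  then have "x \<in> VV" "G x = z" by (simp_all add: G_def)
  then show ?thesis by blast
qed
lemma G_light: "x \<in> VV \<Longrightarrow> mu (G x) = 0 \<longleftrightarrow> mu x = 0"
  using F_light[of x 0] by (simp add: G_def)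
lemma G_symd: "x \<in> VV \<Longrightarrow> x 0 = 0 \<Longrightarrow> G x 0 = 0 \<Longrightarrow> mu (G x) = mu x"
  using F_symd[of x 0] by (simp add: G_def)
lemma G_sum: "(\<And>i. i \<in> A \<Longrightarrow> f i \<in> VV) \<Longrightarrow> G (sum f A) = (\<Sum>i\<in>A. G (f i))"
proof (induction A rule: infinite_finite_induct)
  case (insert x A)
  have fx: "f x \<in> VV" and sA: "sum f A \<in> VV" using insert.prems VV_sum[of A f] by auto
  have "G (sum f (insert x A)) = G (f x + sum f A)" by (simp only: sum.insert[OF insert.hyps(1,2)])
  also have "\<dots> = G (f x) + G (sum f A)" using G_add[OF fx sA] .
  also have "\<dots> = G (f x) + (\<Sum>i\<in>A. G (f i))" using insert.IH insert.prems by (simp only: insert_iff) simp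
  also have "\<dots> = (\<Sum>i\<in>insert x A. G (f i))" by (simp only: sum.insert[OF insert.hyps(1,2)])
  finally show ?case .
qed simp_all
lemma G_nat: "x \<in> VV \<Longrightarrow> G (sc (of_nat n) x) = sc (of_nat n) (G x)"
proof (induction n)
  case (Suc n)
  have e: "sc (of_nat (Suc n)) x = sc (of_nat n) x + x" by (rule ext) (simp add: algebra_simps)
  have "G (sc (of_nat (Suc n)) x) = G (sc (of_nat n) x) + G x" unfolding e
    by (rule G_add) (use Suc in simp_all)
  also have "\<dots> = sc (of_nat n) (G x) + G x" by (simp only: Suc.IH[OF Suc.prems])
  also have "\<dots> = sc (of_nat (Suc n)) (G x)" by (rule ext) (simp add: algebra_simps)
  finally show ?case .
qed simp

end

definition additive :: "('q::field \<Rightarrow> 'q) \<Rightarrow> bool" where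
  "additive f = (\<forall>x y. f (x + y) = f x + f y)"

lemma add_zero: "additive f \<Longrightarrow> f 0 = 0"
  unfolding additive_def by (metis add_0_right add_cancel_right_right)
lemma add_minus: "additive f \<Longrightarrow> f (- x) = - f x"
  unfolding additive_def by (metis add.right_inverse add_zero additive_def eq_neg_iff_add_eq_0)
lemma add_diff: "additive f \<Longrightarrow> f (x - y) = f x - f y"
  using add_minus[of f y] unfolding additive_def by (metis diff_conv_add_uminus)
lemma add_nat: "additive f \<Longrightarrow> f (of_nat n * x) = of_nat n * f x"
proof (induction n)
  case 0 then show ?case using add_zero by simp
next
  case (Suc n) then show ?case unfolding additive_def by (simp add: algebra_simps)
qed
lemma add_half: "additive (f::'q::linordered_field \<Rightarrow> 'q) \<Longrightarrow> f (x / 2) = f x / 2"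
proof -
  assume a: "additive f"
  have "f (of_nat 2 * (x / 2)) = of_nat 2 * f (x / 2)" by (rule add_nat[OF a])
  then show ?thesis by simp
qed
lemma add_two: "additive f \<Longrightarrow> f (2 * x) = 2 * f x"
  using add_nat[of f 2 x] by simp

lemma hua:
  fixes s :: "'q::linordered_field \<Rightarrow> 'q"
  assumes a: "additive s" and one: "s 1 = 1" and inv: "\<And>x. x \<noteq> 0 \<Longrightarrow> s (1 / x) * s x = 1"
  shows "s (x * y) = s x * s y"
proof -
  have snz: "s z \<noteq> 0" if "z \<noteq> 0" for z
    using inv[OF that] by auto
  have sinv: "s (1 / z) = 1 / s z" if "z \<noteq> 0" for z
    using inv[OF that] snz[OF that] by (simp add: eq_divide_eq)
  have sq: "s (z * z) = s z * s z" for z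
  proof (cases "z = 0 \<or> z = 1")
    case True then show ?thesis using add_zero[OF a] one by auto
  next
    case False
    then have z0: "z \<noteq> 0" and z1: "z - 1 \<noteq> 0" and zz: "z * z - z \<noteq> 0" by (auto simp: algebra_simps)
    have e: "1 / (z * z - z) = 1 / (z - 1) - 1 / z" using z0 z1 by (simp add: field_simps)
    have sz1: "s (z - 1) = s z - 1" using add_diff[OF a] one by simp
    have "1 / s (z * z - z) = 1 / (s z - 1) - 1 / s z"
      using arg_cong[OF e, of s] sinv[OF zz] sinv[OF z0] sinv[OF z1] add_diff[OF a] sz1 by simp
    moreover have "s z - 1 \<noteq> 0" using snz[OF z1] sz1 by simp
    moreover have "s z \<noteq> 0" using snz[OF z0] .
    moreover have "s (z * z - z) \<noteq> 0" using snz[OF zz] .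
    ultimately have "s (z * z - z) = s z * s z - s z" by (simp add: field_simps)
    then show ?thesis using add_diff[OF a, of "z * z" z] by simp
  qed
  have "s ((x + y) * (x + y)) = s (x * x) + s (y * y) + s (2 * (x * y))"
    using a unfolding additive_def by (simp add: algebra_simps)
  then have "2 * s (x * y) = 2 * (s x * s y)"
    using sq[of "x + y"] sq[of x] sq[of y] add_two[OF a, of "x * y"] a unfolding additive_def
    by (simp add: algebra_simps)
  then show ?thesis by simp
qed

context core
begin

lemma sc_cancel: "x \<noteq> 0 \<Longrightarrow> sc a x = sc b x \<Longrightarrow> a = b"
proof -
  assume "x \<noteq> 0" "sc a x = sc b x"
  then obtain i where "x i \<noteq> 0" by (auto simp: fun_eq_iff)
  moreover have "a * x i = b * x i" using \<open>sc a x = sc b x\<close> by (metis sc_apply)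
  ultimately show "a = b" by simp
qed

lemma G_nz: "u \<in> VV \<Longrightarrow> u \<noteq> 0 \<Longrightarrow> G u \<noteq> 0"
  using G_inj[of u 0] by auto

definition lam :: "(nat \<Rightarrow> 'q) \<Rightarrow> 'q \<Rightarrow> 'q" where
  "lam u t = (SOME c. G (sc t u) = sc c (G u))"

lemma lam_ex:
  assumes uV: "u \<in> VV" and mu: "mu u = 0" and nz: "u \<noteq> 0"
  shows "G (sc t u) = sc (lam u t) (G u)"
proof -
  have GuV: "G u \<in> VV" using G_V uV by simp
  have mGu: "mu (G u) = 0" using G_light uV mu by simp
  have Gnz: "G u \<noteq> 0" using G_nz uV nz by simp
  have tV: "sc t u \<in> VV" using uV by simp
  have mGt: "mu (G (sc t u)) = 0" using G_light[OF tV] mu by (simp add: mu_sc)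
  have "G (sc t u) - G u = G (sc (t - 1) u)"
    using G_diff[OF tV uV] by (simp add: sc_diff1)
  then have "mu (G (sc t u) - G u) = 0" using G_light[of "sc (t - 1) u"] uV mu by (simp add: mu_sc)
  then have "BB (G (sc t u)) (G u) = 0" using mGt mGu by (simp add: mu_diff)
  then have "\<exists>c. G (sc t u) = sc c (G u)"
    using null_par'[of "G (sc t u)" "G u"] G_V tV GuV mGt mGu Gnz by auto
  then show ?thesis unfolding lam_def by (rule someI_ex)
qed

lemma lam_additive:
  assumes uV: "u \<in> VV" and mu: "mu u = 0" and nz: "u \<noteq> 0"
  shows "additive (lam u)"
  unfolding additive_def
proof (intro allI)
  fix s t
  have Gnz: "G u \<noteq> 0" using G_nz uV nz by simp
  have "sc (lam u (s + t)) (G u) = G (sc s u + sc t u)"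
    using lam_ex[OF assms, of "s + t"] by (simp add: sc_add1)
  also have "\<dots> = G (sc s u) + G (sc t u)" using G_add uV by simp
  also have "\<dots> = sc (lam u s + lam u t) (G u)" using lam_ex[OF assms] by (simp add: sc_add1)
  finally show "lam u (s + t) = lam u s + lam u t" using sc_cancel[OF Gnz] by blast
qed

lemma lam_one:
  assumes uV: "u \<in> VV" and mu: "mu u = 0" and nz: "u \<noteq> 0"
  shows "lam u 1 = 1"
proof -
  have Gnz: "G u \<noteq> 0" using G_nz uV nz by simp
  have "sc (lam u 1) (G u) = sc 1 (G u)" using lam_ex[OF assms, of 1] by simp
  then show ?thesis using sc_cancel[OF Gnz] by blast
qed

lemma lam_surj:
  assumes uV: "u \<in> VV" and mu: "mu u = 0" and nz: "u \<noteq> 0"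
  shows "\<exists>t. lam u t = c"
proof -
  have GuV: "G u \<in> VV" using G_V uV by simp
  have mGu: "mu (G u) = 0" using G_light uV mu by simp
  have Gnz: "G u \<noteq> 0" using G_nz uV nz by simp
  obtain x where xV: "x \<in> VV" and Gx: "G x = sc c (G u)" using G_surj[of "sc c (G u)"] GuV by auto
  have mx: "mu x = 0" using G_light[OF xV] Gx mGu by (simp add: mu_sc)
  have "G (x - u) = sc (c - 1) (G u)" using G_diff[OF xV uV] Gx by (simp add: sc_diff1)
  then have "mu (G (x - u)) = 0" using mGu by (simp add: mu_sc)
  then have "mu (x - u) = 0" using G_light[of "x - u"] xV uV by simp
  then have "BB x u = 0" using mx mu by (simp add: mu_diff)
  then obtain t where xt: "x = sc t u" using null_par'[of x u] xV uV mx mu nz by auto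
  have "sc (lam u t) (G u) = sc c (G u)" using lam_ex[OF assms, of t] Gx xt by simp
  then show ?thesis using sc_cancel[OF Gnz] by blast
qed

lemma inv_rel:
  assumes uV: "u \<in> VV" and vV: "v \<in> VV" and qV: "q \<in> VV"
    and mu: "mu u = 0" and mv: "mu v = 0" and uv: "BB u v \<noteq> 0"
    and qu: "BB q u = 0" and qv: "BB q v = BB u v" and mq: "mu q = - 2 * k0 * BB u v"
    and k0: "k0 \<noteq> 0" and lk: "lam v k0 = k0" and lk2: "\<And>x. lam u (k0 * x) = k0 * lam u x"
    and x: "x \<noteq> 0"
  shows "lam v (1 / x) * lam u x = 1"
proof -
  have unz: "u \<noteq> 0" and vnz: "v \<noteq> 0" using uv by auto
  define \<phi> where "\<phi> = lam u"
  define \<psi> where "\<psi> = lam v"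
  have pa: "additive \<phi>" using lam_additive[OF uV mu unz] by (simp add: \<phi>_def)
  have qa: "additive \<psi>" using lam_additive[OF vV mv vnz] by (simp add: \<psi>_def)
  have p1: "\<phi> 1 = 1" using lam_one[OF uV mu unz] by (simp add: \<phi>_def)
  have ps: "\<exists>t. \<phi> t = c" for c using lam_surj[OF uV mu unz] by (simp add: \<phi>_def)
  have qs: "\<exists>t. \<psi> t = c" for c using lam_surj[OF vV mv vnz] by (simp add: \<psi>_def)
  define Q where "Q = G q"
  define U where "U = G u"
  define W where "W = G v"
  define mQ where "mQ = mu Q"
  define c' where "c' = BB Q W"
  define e' where "e' = BB Q U"
  define b' where "b' = BB U W"
  have rel: "t * (1 - s) = k0 \<longleftrightarrow> mQ + 2 * \<psi> t * c' - 2 * \<phi> s * e' - 2 * \<phi> s * \<psi> t * b' = 0" for s t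
  proof -
    define z where "z = q + sc t v - sc s u"
    have zV: "z \<in> VV" using uV vV qV by (simp add: z_def)
    have "mu z = mu q + 2 * t * BB q v - 2 * s * BB q u - 2 * t * s * BB v u + t^2 * mu v + s^2 * mu u"
      by (simp add: z_def mu_def BB_lin BB_sym[of u q] BB_sym[of v q] BB_sym[of u v] power2_eq_square algebra_simps)
    also have "\<dots> = 2 * BB u v * (t * (1 - s) - k0)"
      using mu mv qu qv mq by (simp add: BB_sym[of v u] algebra_simps)
    finally have mz: "mu z = 2 * BB u v * (t * (1 - s) - k0)" .
    have Gz: "G z = Q + sc (\<psi> t) W - sc (\<phi> s) U"
    proof -
      have "G z = G (q + sc t v) - G (sc s u)" unfolding z_def using G_diff uV vV qV by simp
      also have "\<dots> = G q + G (sc t v) - G (sc s u)" using G_add uV vV qV by simp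
      finally show ?thesis using lam_ex[OF uV mu unz] lam_ex[OF vV mv vnz]
        by (simp add: Q_def U_def W_def \<phi>_def \<psi>_def)
    qed
    have "mu (G z) = mQ + 2 * \<psi> t * c' - 2 * \<phi> s * e' - 2 * \<phi> s * \<psi> t * b' + (\<psi> t)^2 * mu W + (\<phi> s)^2 * mu U"
      unfolding Gz by (simp add: mQ_def c'_def e'_def b'_def mu_def BB_lin BB_sym[of W Q] BB_sym[of U Q] BB_sym[of W U]
          power2_eq_square algebra_simps)
    also have "mu W = 0" using G_light vV mv by (simp add: W_def)
    also have "mu U = 0" using G_light uV mu by (simp add: U_def)
    finally have mGz: "mu (G z) = mQ + 2 * \<psi> t * c' - 2 * \<phi> s * e' - 2 * \<phi> s * \<psi> t * b'" by simp
    have "t * (1 - s) = k0 \<longleftrightarrow> mu z = 0" using mz uv by simp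
    also have "\<dots> \<longleftrightarrow> mu (G z) = 0" using G_light[OF zV] by simp
    finally show ?thesis using mGz by simp
  qed
  have p0: "\<phi> 0 = 0" using add_zero[OF pa] .
  have q0: "\<psi> 0 = 0" using add_zero[OF qa] .
  have e0: "e' = 0"
  proof (rule ccontr)
    assume "e' \<noteq> 0"
    obtain s where "\<phi> s = mQ / (2 * e')" using ps by blast
    then have "mQ + 2 * \<psi> 0 * c' - 2 * \<phi> s * e' - 2 * \<phi> s * \<psi> 0 * b' = 0" using \<open>e' \<noteq> 0\<close> q0 by simp
    then have "0 * (1 - s) = k0" using rel by blast
    then show False using k0 by simp
  qed
  have cb: "c' = b'"
  proof (rule ccontr)
    assume "c' \<noteq> b'"
    obtain t where "\<psi> t = - mQ / (2 * (c' - b'))" using qs by blast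
    then have "mQ + 2 * \<psi> t * c' - 2 * \<phi> 1 * e' - 2 * \<phi> 1 * \<psi> t * b' = 0"
      using \<open>c' \<noteq> b'\<close> e0 p1 by (simp add: field_simps)
    then have "t * (1 - 1) = k0" using rel by blast
    then show False using k0 by simp
  qed
  have "mQ + 2 * \<psi> k0 * c' - 2 * \<phi> 0 * e' - 2 * \<phi> 0 * \<psi> k0 * b' = 0"
    using rel[of k0 0] by simp
  then have mQv: "mQ = - 2 * k0 * c'" using lk p0 by (simp add: \<psi>_def)
  have cnz: "c' \<noteq> 0"
  proof
    assume "c' = 0"
    then have "mQ + 2 * \<psi> 0 * c' - 2 * \<phi> 0 * e' - 2 * \<phi> 0 * \<psi> 0 * b' = 0" using mQv p0 q0 by simp
    then have "0 * (1 - 0) = k0" using rel by blast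
    then show False using k0 by simp
  qed
  have "(1 / x) * (1 - (1 - k0 * x)) = k0" using x by simp
  then have "mQ + 2 * \<psi> (1 / x) * c' - 2 * \<phi> (1 - k0 * x) * e' - 2 * \<phi> (1 - k0 * x) * \<psi> (1 / x) * b' = 0"
    using rel by blast
  moreover have "\<phi> (1 - k0 * x) = 1 - k0 * \<phi> x" using add_diff[OF pa] p1 lk2 by (simp add: \<phi>_def)
  ultimately have "- 2 * k0 * c' + 2 * \<psi> (1 / x) * c' - 2 * (1 - k0 * \<phi> x) * \<psi> (1 / x) * c' = 0"
    using e0 cb mQv by simp
  then have "2 * k0 * c' * (\<psi> (1 / x) * \<phi> x - 1) = 0" by (simp add: algebra_simps)
  then show ?thesis using k0 cnz by (simp add: \<phi>_def \<psi>_def)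
qed

end

context VS
begin

lemma nn_apply: "1 \<le> j \<Longrightarrow> nn j s i = (if i = 0 then 1 else 0) + s * (if i = j then 1 else 0)"
  by (simp add: nn_def)

lemma nn_nz: "1 \<le> j \<Longrightarrow> nn j s \<noteq> 0"
proof
  assume "1 \<le> j" "nn j s = 0"
  then have "nn j s 0 = 0" by simp
  then show False using \<open>1 \<le> j\<close> by (simp add: nn_apply)
qed

lemma mu_ee: "1 \<le> j \<Longrightarrow> j < d \<Longrightarrow> mu (ee j) = -1"
  by (simp add: mu_def)

lemma BB_sum1: "BB (\<Sum>i\<in>A. f i) y = (\<Sum>i\<in>A. BB (f i) y)"
proof (induction A rule: infinite_finite_induct)
  case (insert x A)
  have "BB (sum f (insert x A)) y = BB (f x + sum f A) y" by (simp only: sum.insert[OF insert.hyps(1,2)])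
  also have "\<dots> = BB (f x) y + BB (sum f A) y" by (rule BB_add1)
  also have "\<dots> = (\<Sum>i\<in>insert x A. BB (f i) y)" using insert by simp
  finally show ?case .
qed (simp_all add: BB_def)

lemma BB_sum2: "BB y (\<Sum>i\<in>A. f i) = (\<Sum>i\<in>A. BB y (f i))"
  using BB_sum1[of f A y] by (simp add: BB_sym)

end

context core
begin

lemma pair_rel:
  assumes j: "1 \<le> j" "j < d" and j': "1 \<le> j'" "j' < d" and s: "s \<in> {1, -1}" and s': "s' \<in> {1, -1}"
    and ne: "(j, s) \<noteq> (j', s')" and x: "x \<noteq> 0"
  shows "lam (nn j' s') (1 / x) * lam (nn j s) x = 1"
proof -
  define u where "u = nn j s"
  define v where "v = nn j' s'"
  have uV: "u \<in> VV" and vV: "v \<in> VV" using j j' by (simp_all add: u_def v_def)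
  have mu: "mu u = 0" and mv: "mu v = 0" using mu_nn j j' s s' by (simp_all add: u_def v_def)
  have unz: "u \<noteq> 0" and vnz: "v \<noteq> 0" using nn_nz j j' by (simp_all add: u_def v_def)
  show ?thesis
  proof (cases "j = j'")
    case True
    then have ss: "s * s' = -1" using s s' ne by auto
    define k where "k = (if j = 1 then 2 else (1::nat))"
    have k: "1 \<le> k" "k < d" "k \<noteq> j" using d3 j by (auto simp: k_def)
    define q where "q = u + sc 2 (ee k)"
    have qV: "q \<in> VV" using uV k by (simp add: q_def)
    have uv: "BB u v = 2" using j True ss by (simp add: u_def v_def BB_nn_nn)
    have uk: "u k = 0" using k j by (simp add: u_def nn_apply)
    have vk: "v k = 0" using k True j by (simp add: v_def nn_apply)
    have qu: "BB q u = 0" using mu uk k by (simp add: q_def BB_lin mu_def)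
    have qv: "BB q v = BB u v" using vk k by (simp add: q_def BB_lin)
    have mq: "mu q = - 2 * 1 * BB u v"
      using mu uk k uv by (simp add: q_def mu_add mu_sc mu_ee BB_lin)
    have "lam v (1 / x) * lam u x = 1"
      by (rule inv_rel[OF uV vV qV mu mv _ qu qv mq _ _ _ x])
         (use uv lam_one[OF vV mv vnz] in simp_all)
    then show ?thesis by (simp add: u_def v_def)
  next
    case False
    define q where "q = sc (1 + s') u + ee j'"
    have qV: "q \<in> VV" using uV j' by (simp add: q_def)
    have uv: "BB u v = 1" using j j' False by (simp add: u_def v_def BB_nn_nn)
    have uj': "u j' = 0" using j' j False by (simp add: u_def nn_apply)
    have vj': "v j' = s'" using j' by (simp add: v_def nn_apply)
    have qu: "BB q u = 0" using mu uj' j' by (simp add: q_def BB_lin mu_def)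
    have qv: "BB q v = BB u v" using vj' j' uv by (simp add: q_def BB_lin)
    have mq: "mu q = - 2 * (1/2) * BB u v"
      using mu uj' j' uv by (simp add: q_def mu_add mu_sc mu_ee BB_lin)
    have la: "additive (lam u)" "additive (lam v)"
      using lam_additive uV vV mu mv unz vnz by auto
    have "lam v (1 / 2) = 1 / 2" using add_half[OF la(2), of 1] lam_one[OF vV mv vnz] by simp
    moreover have "lam u (1 / 2 * y) = 1 / 2 * lam u y" for y using add_half[OF la(1), of y] by simp
    ultimately have "lam v (1 / x) * lam u x = 1"
      using inv_rel[OF uV vV qV mu mv _ qu qv mq _ _ _ x] uv by simp
    then show ?thesis by (simp add: u_def v_def)
  qed
qed

definition sig :: "'q \<Rightarrow> 'q" where "sig = lam (nn 1 1)"

lemma d_facts: "1 < d" "2 < d" using d3 by auto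

lemma lam_gen_eq:
  assumes j: "1 \<le> j" "j < d" and s: "s \<in> {1, -1}"
  shows "lam (nn j s) = sig"
proof (cases "(j, s) = (1, 1)")
  case True then show ?thesis by (simp add: sig_def)
next
  case False
  define j2 where "j2 = (if (j, s) = (1, -1) then 2 else (1::nat))"
  define s2 where "s2 = (if (j, s) = (1, -1) then 1 else (-1::'q))"
  have j2: "1 \<le> j2" "j2 < d" using d3 by (auto simp: j2_def)
  have s2: "s2 \<in> {1, -1}" by (auto simp: s2_def)
  have ne1: "(j, s) \<noteq> (j2, s2)" by (auto simp: j2_def s2_def)
  have ne2: "(1::nat, 1::'q) \<noteq> (j2, s2)" by (auto simp: j2_def s2_def)
  have n1: "(1::nat) \<le> 1" "(1::nat) < d" using d3 by auto
  show ?thesis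
  proof (rule ext)
    fix x
    show "lam (nn j s) x = sig x"
    proof (cases "x = 0")
      case True
      have a1: "additive (lam (nn j s))" using lam_additive[of "nn j s"] j s mu_nn nn_nz by auto
      have a2: "additive (lam (nn 1 (1::'q)))" using lam_additive[of "nn 1 1"] n1 mu_nn[of 1 1] nn_nz[of 1 1] by auto
      show ?thesis using True add_zero[OF a1] add_zero[OF a2] by (simp add: sig_def)
    next
      case False
      have e1: "lam (nn j2 s2) (1 / x) * lam (nn j s) x = 1"
        using pair_rel[OF j j2 s s2 ne1 False] .
      have e2: "lam (nn j2 s2) (1 / x) * lam (nn 1 1) x = 1"
        using pair_rel[OF n1 j2 _ s2 ne2 False] by simp
      have nz: "lam (nn j2 s2) (1 / x) \<noteq> 0" using e1 by auto
      have "lam (nn j s) x = lam (nn 1 1) x" using e1 e2 nz mult_left_cancel by metis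
      then show ?thesis by (simp add: sig_def)
    qed
  qed
qed

lemma sig_additive: "additive sig"
  using lam_additive[of "nn 1 1"] d3 mu_nn[of 1 1] nn_nz[of 1 1] by (auto simp: sig_def)
lemma sig_one: "sig 1 = 1"
  using lam_one[of "nn 1 1"] d3 mu_nn[of 1 1] nn_nz[of 1 1] by (auto simp: sig_def)
lemma sig_surj: "\<exists>t. sig t = c"
  using lam_surj[of "nn 1 1"] d3 mu_nn[of 1 1] nn_nz[of 1 1] by (auto simp: sig_def)
lemma sig_inv: "x \<noteq> 0 \<Longrightarrow> sig (1 / x) * sig x = 1"
proof -
  assume x: "x \<noteq> 0"
  have n1: "(1::nat) \<le> 1" "(1::nat) < d" using d3 by auto
  have "lam (nn 1 (-1)) (1 / x) * lam (nn 1 1) x = 1"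
    using pair_rel[OF n1 n1 _ _ _ x] by simp
  moreover have "lam (nn 1 (-1::'q)) = sig" using lam_gen_eq[OF n1] by simp
  ultimately show ?thesis by (simp add: sig_def)
qed
lemma sig_mult: "sig (x * y) = sig x * sig y"
  using hua[OF sig_additive sig_one sig_inv] by blast

lemma G_semi: "x \<in> VV \<Longrightarrow> G (sc t x) = sc (sig t) (G x)"
proof -
  define T where "T = {x \<in> VV. \<forall>t. G (sc t x) = sc (sig t) (G x)}"
  have n1: "(1::nat) \<le> 1" "(1::nat) < d" using d3 by auto
  have "0 \<in> T" by (simp add: T_def)
  moreover have "x + y \<in> T" if "x \<in> T" "y \<in> T" for x y
  proof -
    have xV: "x \<in> VV" and yV: "y \<in> VV" using that by (auto simp: T_def)
    have "G (sc t (x + y)) = sc (sig t) (G (x + y))" for t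
    proof -
      have "G (sc t (x + y)) = G (sc t x + sc t y)" by (simp only: sc_add2)
      also have "\<dots> = G (sc t x) + G (sc t y)" using G_add xV yV by simp
      also have "\<dots> = sc (sig t) (G x) + sc (sig t) (G y)" using that by (simp add: T_def)
      also have "\<dots> = sc (sig t) (G x + G y)" by (simp only: sc_add2)
      also have "\<dots> = sc (sig t) (G (x + y))" using G_add xV yV by simp
      finally show ?thesis .
    qed
    then show ?thesis using xV yV by (simp add: T_def)
  qed
  moreover have "sc a (nn j s) \<in> T" if j: "1 \<le> j" "j < d" and s: "s \<in> {1, -1}" for j s a
  proof -
    have nV: "nn j s \<in> VV" and mn: "mu (nn j s) = 0" and nz: "nn j s \<noteq> 0"
      using j s mu_nn nn_nz by auto
    have l: "lam (nn j s) = sig" using lam_gen_eq[OF j s] .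
    have "G (sc t (sc a (nn j s))) = sc (sig t) (G (sc a (nn j s)))" for t
    proof -
      have "G (sc t (sc a (nn j s))) = G (sc (t * a) (nn j s))" by (simp only: sc_mult)
      also have "\<dots> = sc (sig (t * a)) (G (nn j s))" using lam_ex[OF nV mn nz] l by simp
      also have "\<dots> = sc (sig t) (sc (sig a) (G (nn j s)))" by (simp only: sig_mult sc_mult)
      also have "\<dots> = sc (sig t) (G (sc a (nn j s)))" using lam_ex[OF nV mn nz] l by simp
      finally show ?thesis .
    qed
    then show ?thesis using nV by (simp add: T_def)
  qed
  ultimately have "\<And>w. w \<in> VV \<Longrightarrow> w \<in> T" using gen_all[OF n1, of 1 T] by blast
  then show "x \<in> VV \<Longrightarrow> G (sc t x) = sc (sig t) (G x)" by (auto simp: T_def)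
qed

lemma exists_good:
  "\<exists>x\<in>VV. x 0 = 0 \<and> x \<noteq> 0 \<and> G x 0 = 0"
proof -
  have e1V: "ee 1 \<in> VV" and e2V: "ee 2 \<in> VV" using d3 by auto
  define c1 where "c1 = G (ee 1) 0"
  define c2 where "c2 = G (ee 2) 0"
  show ?thesis
  proof (cases "c1 = 0")
    case True
    have "ee 1 \<noteq> (0 :: nat \<Rightarrow> 'q)" by (metis ee_apply zero_fun_apply zero_neq_one)
    then show ?thesis using e1V True by (intro bexI[of _ "ee 1"]) (auto simp: c1_def)
  next
    case False
    obtain a where a: "sig a = - c2 / c1" using sig_surj by blast
    define x where "x = sc a (ee 1) + ee 2"
    have xV: "x \<in> VV" unfolding x_def by (intro VV_add VV_sc e1V e2V)
    have "G x = sc (sig a) (G (ee 1)) + G (ee 2)"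
      unfolding x_def G_add[OF VV_sc[OF e1V] e2V] G_semi[OF e1V] ..
    then have "G x 0 = sig a * c1 + c2" by (simp add: c1_def c2_def)
    then have "G x 0 = 0" using a False by simp
    moreover have "x 2 = 1" by (simp add: x_def)
    then have "x \<noteq> 0" by auto
    moreover have "x 0 = 0" by (simp add: x_def)
    ultimately show ?thesis using xV by blast
  qed
qed

lemma sig_id: "sig t = t"
proof -
  obtain x where xV: "x \<in> VV" and x0: "x 0 = 0" and xnz: "x \<noteq> 0" and Gx0: "G x 0 = 0"
    using exists_good by blast
  have mxn: "mu x \<noteq> 0" using spatial_neg[OF xV x0 xnz] by simp
  have key: "sig r * sig r * mu (G x) = r * r * mu x" for r
  proof -
    have "G (sc r x) 0 = 0" using G_semi[OF xV] Gx0 by simp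
    moreover have "(sc r x) 0 = 0" using x0 by simp
    ultimately have "mu (G (sc r x)) = mu (sc r x)" using G_symd xV by simp
    then show ?thesis using G_semi[OF xV] by (simp add: mu_sc power2_eq_square)
  qed
  have "mu (G x) = mu x" using key[of 1] sig_one by simp
  then have sq: "sig r * sig r = r * r" for r using key[of r] mxn by simp
  have "sig (t + 1) = sig t + 1" using sig_additive sig_one by (simp add: additive_def)
  then have "(sig t + 1) * (sig t + 1) = (t + 1) * (t + 1)" using sq[of "t + 1"] by simp
  then have "2 * sig t = 2 * t" using sq[of t] by (simp add: algebra_simps)
  then show ?thesis by simp
qed

lemma G_lin: "x \<in> VV \<Longrightarrow> G (sc t x) = sc t (G x)"
  using G_semi sig_id by simp

end

context core
begin

lemma G_expand: "y \<in> VV \<Longrightarrow> G y = (\<Sum>i<d. sc (y i) (G (ee i)))"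
proof -
  assume yV: "y \<in> VV"
  have "G y = G (\<Sum>i<d. sc (y i) (ee i))" using decomp[OF yV] by simp
  also have "\<dots> = (\<Sum>i<d. G (sc (y i) (ee i)))" by (rule G_sum) simp
  also have "\<dots> = (\<Sum>i<d. sc (y i) (G (ee i)))" by (rule sum.cong) (simp_all add: G_lin)
  finally show ?thesis .
qed

definition beta where "beta i j = BB (G (ee i)) (G (ee j))"
definition kappa where "kappa = beta 0 0"

lemma beta_sym: "beta i j = beta j i" by (simp add: beta_def BB_sym)

lemma beta_0j: assumes j: "1 \<le> j" "j < d" shows "beta 0 j = 0" and "beta j j = - kappa"
proof -
  have e0V: "ee 0 \<in> VV" and ejV: "ee j \<in> VV" using j d3 by auto
  have r: "kappa + 2 * s * beta 0 j + s * s * beta j j = 0" if s: "s \<in> {1, -1}" for s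
  proof -
    have "G (nn j s) = G (ee 0) + sc s (G (ee j))"
      unfolding nn_def G_add[OF e0V VV_sc[OF ejV]] G_lin[OF ejV] ..
    moreover have "mu (G (nn j s)) = 0" using G_light[of "nn j s"] mu_nn[OF j s] j by simp
    ultimately have "mu (G (ee 0) + sc s (G (ee j))) = 0" by simp
    then show ?thesis by (simp add: mu_add mu_sc kappa_def beta_def mu_def BB_lin power2_eq_square
        BB_sym[of "G (ee j)" "G (ee 0)"] algebra_simps)
  qed
  have a: "kappa + 2 * beta 0 j + beta j j = 0" using r[of 1] by simp
  have b: "kappa - 2 * beta 0 j + beta j j = 0" using r[of "-1"] by simp
  from a b show "beta 0 j = 0" by simp
  from a b show "beta j j = - kappa" by simp
qed

lemma beta_ij: assumes i: "1 \<le> i" "i < d" and j: "1 \<le> j" "j < d" and ij: "i \<noteq> j"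
  shows "beta i j = 0"
proof -
  have e0V: "ee 0 \<in> VV" and eiV: "ee i \<in> VV" and ejV: "ee j \<in> VV" using i j d3 by auto
  define z :: "nat \<Rightarrow> 'q" where "z = sc 5 (ee 0) + sc 3 (ee i) + sc 4 (ee j)"
  have zV: "z \<in> VV" unfolding z_def by (intro VV_add VV_sc e0V eiV ejV)
  have "mu z = 25 - 9 - 16" using i j ij by (simp add: z_def mu_def BB_lin)
  then have mz: "mu z = 0" by simp
  have "G z = sc 5 (G (ee 0)) + sc 3 (G (ee i)) + sc 4 (G (ee j))"
    unfolding z_def G_add[OF VV_add[OF VV_sc[OF e0V] VV_sc[OF eiV]] VV_sc[OF ejV]]
      G_add[OF VV_sc[OF e0V] VV_sc[OF eiV]] G_lin[OF e0V] G_lin[OF eiV] G_lin[OF ejV] ..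
  moreover have "mu (G z) = 0" using G_light[OF zV] mz by simp
  ultimately have "mu (sc 5 (G (ee 0)) + sc 3 (G (ee i)) + sc 4 (G (ee j))) = 0" by simp
  then have "25 * kappa + 9 * beta i i + 16 * beta j j + 30 * beta 0 i + 40 * beta 0 j + 24 * beta i j = 0"
    by (simp add: mu_def BB_lin kappa_def beta_def BB_sym[of "G (ee i)" "G (ee 0)"]
        BB_sym[of "G (ee j)" "G (ee 0)"] BB_sym[of "G (ee j)" "G (ee i)"] algebra_simps)
  then show ?thesis using beta_0j[OF i] beta_0j[OF j] by simp
qed

lemma beta_all: "i < d \<Longrightarrow> j < d \<Longrightarrow>
    beta i j = (if i = j then (if i = 0 then kappa else - kappa) else 0)"
proof -
  assume i: "i < d" and j: "j < d"
  show ?thesis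
  proof (cases "i = j")
    case True then show ?thesis using beta_0j[of i] i by (cases "i = 0") (auto simp: kappa_def)
  next
    case False
    show ?thesis
    proof (cases "i = 0")
      case True then show ?thesis using False beta_0j[of j] j by auto
    next
      case i0: False
      show ?thesis
      proof (cases "j = 0")
        case True then show ?thesis using i0 beta_0j[of i] i beta_sym[of i 0] by auto
      next
        case False then show ?thesis using i0 beta_ij[of i j] i j \<open>i \<noteq> j\<close> by auto
      qed
    qed
  qed
qed

lemma mu_G_kappa: "y \<in> VV \<Longrightarrow> mu (G y) = kappa * mu y"
proof -
  assume yV: "y \<in> VV"
  have "mu (G y) = (\<Sum>i<d. \<Sum>j<d. y i * (y j * beta i j))"
    unfolding mu_def G_expand[OF yV] BB_sum1 BB_sum2 BB_sc1 BB_sc2 beta_def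
    by (simp add: sum_distrib_left BB_sym)
  also have "\<dots> = (\<Sum>i<d. y i * y i * (if i = 0 then kappa else - kappa))"
  proof (rule sum.cong)
    fix i assume "i \<in> {..<d}"
    then have i: "i < d" by simp
    have "(\<Sum>j<d. y i * (y j * beta i j)) = (\<Sum>j<d. if j = i then y i * y i * (if i = 0 then kappa else - kappa) else 0)"
      by (rule sum.cong) (auto simp: beta_all i)
    also have "\<dots> = y i * y i * (if i = 0 then kappa else - kappa)" using i by (simp add: sum.delta')
    finally show "(\<Sum>j<d. y i * (y j * beta i j)) = y i * y i * (if i = 0 then kappa else - kappa)" .
  qed simp
  also have "\<dots> = (\<Sum>i\<in>{0..<d}. y i * y i * (if i = 0 then kappa else - kappa))"
    by (simp add: atLeast0LessThan)
  also have "\<dots> = y 0 * y 0 * kappa + (\<Sum>i\<in>{Suc 0..<d}. y i * y i * (if i = 0 then kappa else - kappa))"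
    using d3 by (subst sum.atLeast_Suc_lessThan) auto
  also have "(\<Sum>i\<in>{Suc 0..<d}. y i * y i * (if i = 0 then kappa else - kappa)) = (\<Sum>i\<in>{1..<d}. - kappa * (y i)^2)"
    by (rule sum.cong) (auto simp: power2_eq_square)
  also have "(\<Sum>i\<in>{1..<d}. - kappa * (y i)^2) = - kappa * (\<Sum>i\<in>{1..<d}. (y i)^2)"
    by (simp add: sum_distrib_left)
  also have "y 0 * y 0 * kappa + - kappa * (\<Sum>i\<in>{1..<d}. (y i)^2) = kappa * mu y"
    by (simp add: mu_expand power2_eq_square algebra_simps)
  finally show ?thesis .
qed

lemma kappa_one: "kappa = 1"
proof -
  obtain x where xV: "x \<in> VV" and x0: "x 0 = 0" and xnz: "x \<noteq> 0" and Gx0: "G x 0 = 0"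
    using exists_good by blast
  have mxn: "mu x \<noteq> 0" using spatial_neg[OF xV x0 xnz] by simp
  have "mu (G x) = mu x" using G_symd[OF xV x0 Gx0] .
  then show ?thesis using mu_G_kappa[OF xV] mxn by simp
qed

lemma G_isom: "y \<in> VV \<Longrightarrow> mu (G y) = mu y"
  using mu_G_kappa kappa_one by simp

theorem core_main:
  shows "\<And>x y. x \<in> VV \<Longrightarrow> y \<in> VV \<Longrightarrow> mu (F x - F y) = mu (x - y)"
    and "\<And>x. x \<in> VV \<Longrightarrow> F x = F 0 + (\<Sum>i<d. sc (x i) (G (ee i)))"
proof -
  fix x y :: "nat \<Rightarrow> 'q" assume xV: "x \<in> VV" and yV: "y \<in> VV"
  have "F x = F 0 + G x" using F_G[of 0 x] xV by simp
  moreover have "F y = F 0 + G y" using F_G[of 0 y] yV by simp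
  ultimately have "F x - F y = G (x - y)" using G_diff[OF xV yV] by simp
  then show "mu (F x - F y) = mu (x - y)" using G_isom xV yV by simp
next
  fix x :: "nat \<Rightarrow> 'q" assume xV: "x \<in> VV"
  have "F x = F 0 + G x" using F_G[of 0 x] xV by simp
  then show "F x = F 0 + (\<Sum>i<d. sc (x i) (G (ee i)))" using G_expand[OF xV] by simp
qed

end

fun allQ :: "nat list \<Rightarrow> form \<Rightarrow> form" where
  "allQ [] f = f"
| "allQ (n # ns) f = Neg (ExQ n (Neg (allQ ns f)))"

lemma sat_allQ:
  "sat IOb Ph W eb eq (allQ ns f) \<longleftrightarrow> (\<forall>eq'. (\<forall>i. i \<notin> set ns \<longrightarrow> eq' i = eq i) \<longrightarrow> sat IOb Ph W eb eq' f)"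
proof (induction ns arbitrary: eq)
  case Nil
  then show ?case by (auto simp: fun_eq_iff)
next
  case (Cons n ns)
  show ?case
  proof
    assume h: "sat IOb Ph W eb eq (allQ (n # ns) f)"
    show "\<forall>eq'. (\<forall>i. i \<notin> set (n # ns) \<longrightarrow> eq' i = eq i) \<longrightarrow> sat IOb Ph W eb eq' f"
    proof (intro allI impI)
      fix eq' assume a: "\<forall>i. i \<notin> set (n # ns) \<longrightarrow> eq' i = eq i"
      have "sat IOb Ph W eb (eq(n := eq' n)) (allQ ns f)" using h by simp
      moreover have "\<forall>i. i \<notin> set ns \<longrightarrow> eq' i = (eq(n := eq' n)) i" using a by auto
      ultimately show "sat IOb Ph W eb eq' f" using Cons.IH by blast
    qed
  next
    assume h: "\<forall>eq'. (\<forall>i. i \<notin> set (n # ns) \<longrightarrow> eq' i = eq i) \<longrightarrow> sat IOb Ph W eb eq' f"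
    have "sat IOb Ph W eb (eq(n := q)) (allQ ns f)" for q
    proof -
      have "\<forall>eq'. (\<forall>i. i \<notin> set ns \<longrightarrow> eq' i = (eq(n := q)) i) \<longrightarrow> sat IOb Ph W eb eq' f"
      proof (intro allI impI)
        fix eq' assume a: "\<forall>i. i \<notin> set ns \<longrightarrow> eq' i = (eq(n := q)) i"
        have "\<forall>i. i \<notin> set (n # ns) \<longrightarrow> eq' i = eq i" using a by auto
        then show "sat IOb Ph W eb eq' f" using h by blast
      qed
      then show ?thesis using Cons.IH by blast
    qed
    then show "sat IOb Ph W eb eq (allQ (n # ns) f)" by simp
  qed
qed

lemma fvB_allQ: "fvB (allQ ns f) = fvB f" by (induction ns) auto
lemma wf_allQ: "wf_form d (allQ ns f) = wf_form d f" by (induction ns) auto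

definition iffF :: "form \<Rightarrow> form \<Rightarrow> form" where
  "iffF a b = Conj (Neg (Conj a (Neg b))) (Neg (Conj b (Neg a)))"

lemma sat_iffF: "sat IOb Ph W eb eq (iffF a b) \<longleftrightarrow> (sat IOb Ph W eb eq a \<longleftrightarrow> sat IOb Ph W eb eq b)"
  by (auto simp: iffF_def)

definition sumT :: "(nat \<Rightarrow> qterm) \<Rightarrow> nat list \<Rightarrow> qterm \<Rightarrow> qterm" where
  "sumT t l base = foldr (\<lambda>i acc. QAdd (t i) acc) l base"

lemma eval_sumT: "evalq eq (sumT t l base) = (\<Sum>i\<leftarrow>l. evalq eq (t i)) + evalq eq base"
  by (induction l) (auto simp: sumT_def algebra_simps)

definition XT :: "nat \<Rightarrow> qterm" where "XT i = QVar i"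
definition YT :: "nat \<Rightarrow> nat \<Rightarrow> qterm" where "YT d i = QVar (d + i)"

definition lightF :: "nat \<Rightarrow> form" where
  "lightF d = allQ [0..<2 * d]
     (iffF (ExB 1 (ExB 2 (Conj (PhA 1 2) (Conj (WA 0 1 (map XT [0..<d])) (WA 0 1 (map (YT d) [0..<d]))))))
           (QEq (sumT (\<lambda>i. QAdd (QMul (XT i) (XT i)) (QMul (YT d i) (YT d i))) [1..<d]
                   (QAdd (QMul (XT 0) (YT d 0)) (QMul (XT 0) (YT d 0))))
                (sumT (\<lambda>i. QAdd (QMul (XT i) (YT d i)) (QMul (XT i) (YT d i))) [1..<d]
                   (QAdd (QMul (XT 0) (XT 0)) (QMul (YT d 0) (YT d 0))))))"

lemma fvB_lightF: "fvB (lightF d) \<subseteq> {0}"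
  unfolding lightF_def fvB_allQ iffF_def by (simp; blast)

lemma wf_lightF: "wf_form d (lightF d)"
  by (simp add: lightF_def wf_allQ iffF_def)

lemma poly_equiv:
  fixes x y :: "'q::linordered_field list"
  assumes lx: "length x = d" and ly: "length y = d" and d: "1 \<le> d"
  shows "((\<Sum>i\<leftarrow>[1..<d]. x!i * x!i + y!i * y!i) + (x!0 * y!0 + x!0 * y!0) =
          (\<Sum>i\<leftarrow>[1..<d]. x!i * y!i + x!i * y!i) + (x!0 * x!0 + y!0 * y!0))
        \<longleftrightarrow> space2 d x y = (time x y)^2"
proof -
  have s1: "(\<Sum>i\<leftarrow>[1..<d]. x!i * x!i + y!i * y!i) = (\<Sum>i\<in>{1..<d}. x!i * x!i + y!i * y!i)"
    by (simp add: sum_list_distinct_conv_sum_set)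
  have s2: "(\<Sum>i\<leftarrow>[1..<d]. x!i * y!i + x!i * y!i) = (\<Sum>i\<in>{1..<d}. x!i * y!i + x!i * y!i)"
    by (simp add: sum_list_distinct_conv_sum_set)
  have sp: "space2 d x y = (\<Sum>i\<in>{1..<d}. x!i * x!i + y!i * y!i) - (\<Sum>i\<in>{1..<d}. x!i * y!i + x!i * y!i)"
    unfolding space2_def by (simp add: sum_subtractf[symmetric] power2_eq_square algebra_simps)
  show ?thesis unfolding s1 s2 sp time_def by (simp add: power2_eq_square algebra_simps)
qed

lemma sat_lightF:
  fixes W :: "'b \<Rightarrow> 'b \<Rightarrow> 'q::linordered_field list \<Rightarrow> bool"
  assumes d: "1 \<le> d"
  shows "sat IOb Ph W (eb(0 := h)) eq (lightF d) \<longleftrightarrow>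
    (\<forall>x y. length x = d \<and> length y = d \<longrightarrow>
       ((\<exists>p b. Ph p b \<and> W h p x \<and> W h p y) \<longleftrightarrow> space2 d x y = (time x y)^2))"
proof -
  have body: "sat IOb Ph W (eb(0 := h)) eq'
      (iffF (ExB 1 (ExB 2 (Conj (PhA 1 2) (Conj (WA 0 1 (map XT [0..<d])) (WA 0 1 (map (YT d) [0..<d]))))))
           (QEq (sumT (\<lambda>i. QAdd (QMul (XT i) (XT i)) (QMul (YT d i) (YT d i))) [1..<d]
                   (QAdd (QMul (XT 0) (YT d 0)) (QMul (XT 0) (YT d 0))))
                (sumT (\<lambda>i. QAdd (QMul (XT i) (YT d i)) (QMul (XT i) (YT d i))) [1..<d]
                   (QAdd (QMul (XT 0) (XT 0)) (QMul (YT d 0) (YT d 0))))))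
     \<longleftrightarrow> ((\<exists>p b. Ph p b \<and> W h p (map eq' [0..<d]) \<and> W h p (map (\<lambda>i. eq' (d + i)) [0..<d])) \<longleftrightarrow>
          space2 d (map eq' [0..<d]) (map (\<lambda>i. eq' (d + i)) [0..<d]) = (time (map eq' [0..<d]) (map (\<lambda>i. eq' (d + i)) [0..<d]))^2)"
    for eq'
  proof -
    let ?x = "map eq' [0..<d]" and ?y = "map (\<lambda>i. eq' (d + i)) [0..<d]"
    have A: "sat IOb Ph W (eb(0 := h)) eq' (ExB 1 (ExB 2 (Conj (PhA 1 2) (Conj (WA 0 1 (map XT [0..<d])) (WA 0 1 (map (YT d) [0..<d]))))))
       \<longleftrightarrow> (\<exists>p b. Ph p b \<and> W h p ?x \<and> W h p ?y)"
      by (simp add: comp_def XT_def YT_def)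
    have Q: "sat IOb Ph W (eb(0 := h)) eq' (QEq (sumT (\<lambda>i. QAdd (QMul (XT i) (XT i)) (QMul (YT d i) (YT d i))) [1..<d]
                   (QAdd (QMul (XT 0) (YT d 0)) (QMul (XT 0) (YT d 0))))
                (sumT (\<lambda>i. QAdd (QMul (XT i) (YT d i)) (QMul (XT i) (YT d i))) [1..<d]
                   (QAdd (QMul (XT 0) (XT 0)) (QMul (YT d 0) (YT d 0)))))
       \<longleftrightarrow> ((\<Sum>i\<leftarrow>[1..<d]. ?x!i * ?x!i + ?y!i * ?y!i) + (?x!0 * ?y!0 + ?x!0 * ?y!0) =
          (\<Sum>i\<leftarrow>[1..<d]. ?x!i * ?y!i + ?x!i * ?y!i) + (?x!0 * ?x!0 + ?y!0 * ?y!0))"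
    proof -
      have c1: "(\<Sum>i\<leftarrow>[1..<d]. ?x!i * ?x!i + ?y!i * ?y!i) = (\<Sum>i\<leftarrow>[1..<d]. eq' i * eq' i + eq' (d + i) * eq' (d + i))"
        by (rule arg_cong[where f=sum_list]) (rule map_cong, auto)
      have c2: "(\<Sum>i\<leftarrow>[1..<d]. ?x!i * ?y!i + ?x!i * ?y!i) = (\<Sum>i\<leftarrow>[1..<d]. eq' i * eq' (d + i) + eq' i * eq' (d + i))"
        by (rule arg_cong[where f=sum_list]) (rule map_cong, auto)
      show ?thesis unfolding c1 c2 using d by (simp add: eval_sumT XT_def YT_def)
    qed
    have pe: "((\<Sum>i\<leftarrow>[1..<d]. ?x!i * ?x!i + ?y!i * ?y!i) + (?x!0 * ?y!0 + ?x!0 * ?y!0) =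
          (\<Sum>i\<leftarrow>[1..<d]. ?x!i * ?y!i + ?x!i * ?y!i) + (?x!0 * ?x!0 + ?y!0 * ?y!0))
        \<longleftrightarrow> space2 d ?x ?y = (time ?x ?y)^2"
      by (rule poly_equiv) (insert d, simp_all)
    show ?thesis unfolding sat_iffF A Q pe ..
  qed
  show ?thesis
  proof
    assume h: "sat IOb Ph W (eb(0 := h)) eq (lightF d)"
    show "\<forall>x y. length x = d \<and> length y = d \<longrightarrow>
       ((\<exists>p b. Ph p b \<and> W h p x \<and> W h p y) \<longleftrightarrow> space2 d x y = (time x y)^2)"
    proof (intro allI impI)
      fix x y :: "'q list" assume l: "length x = d \<and> length y = d"
      define eq' where "eq' = (\<lambda>i. if i < d then x ! i else if i < 2 * d then y ! (i - d) else eq i)"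
      have agree: "\<forall>i. i \<notin> set [0..<2 * d] \<longrightarrow> eq' i = eq i" by (auto simp: eq'_def)
      have mx: "map eq' [0..<d] = x" using l by (auto simp: eq'_def intro!: nth_equalityI)
      have my: "map (\<lambda>i. eq' (d + i)) [0..<d] = y" using l by (auto simp: eq'_def intro!: nth_equalityI)
      have "sat IOb Ph W (eb(0 := h)) eq' (iffF (ExB 1 (ExB 2 (Conj (PhA 1 2) (Conj (WA 0 1 (map XT [0..<d])) (WA 0 1 (map (YT d) [0..<d]))))))
           (QEq (sumT (\<lambda>i. QAdd (QMul (XT i) (XT i)) (QMul (YT d i) (YT d i))) [1..<d]
                   (QAdd (QMul (XT 0) (YT d 0)) (QMul (XT 0) (YT d 0))))
                (sumT (\<lambda>i. QAdd (QMul (XT i) (YT d i)) (QMul (XT i) (YT d i))) [1..<d]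
                   (QAdd (QMul (XT 0) (XT 0)) (QMul (YT d 0) (YT d 0))))))"
        using h[unfolded lightF_def sat_allQ, rule_format, OF agree[rule_format]] .
      then show "(\<exists>p b. Ph p b \<and> W h p x \<and> W h p y) \<longleftrightarrow> space2 d x y = (time x y)^2"
        unfolding body[of eq'] mx my .
    qed
  next
    assume h: "\<forall>x y. length x = d \<and> length y = d \<longrightarrow>
       ((\<exists>p b. Ph p b \<and> W h p x \<and> W h p y) \<longleftrightarrow> space2 d x y = (time x y)^2)"
    show "sat IOb Ph W (eb(0 := h)) eq (lightF d)"
      unfolding lightF_def sat_allQ
    proof (intro allI impI)
      fix eq' :: "nat \<Rightarrow> 'q"
      show "sat IOb Ph W (eb(0 := h)) eq' (iffF (ExB 1 (ExB 2 (Conj (PhA 1 2) (Conj (WA 0 1 (map XT [0..<d])) (WA 0 1 (map (YT d) [0..<d]))))))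
           (QEq (sumT (\<lambda>i. QAdd (QMul (XT i) (XT i)) (QMul (YT d i) (YT d i))) [1..<d]
                   (QAdd (QMul (XT 0) (YT d 0)) (QMul (XT 0) (YT d 0))))
                (sumT (\<lambda>i. QAdd (QMul (XT i) (YT d i)) (QMul (XT i) (YT d i))) [1..<d]
                   (QAdd (QMul (XT 0) (XT 0)) (QMul (YT d 0) (YT d 0))))))"
        unfolding body[of eq'] by (rule h[rule_format]) simp
    qed
  qed
qed


context VS
begin

definition vec :: "'q::linordered_field list \<Rightarrow> nat \<Rightarrow> 'q" where
  "vec x = (\<lambda>i. if i < d then x ! i else 0)"
definition lst :: "(nat \<Rightarrow> 'q::linordered_field) \<Rightarrow> 'q list" where
  "lst v = map v [0..<d]"

lemma vec_V[simp]: "vec x \<in> VV" by (simp add: vec_def VV_def)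
lemma lst_vec[simp]: "length x = d \<Longrightarrow> lst (vec x) = x"
  by (auto simp: lst_def vec_def intro!: nth_equalityI)
lemma vec_lst[simp]: "v \<in> VV \<Longrightarrow> vec (lst v) = v"
  by (rule VV_eqI[OF vec_V]) (auto simp: lst_def vec_def)
lemma length_lst[simp]: "length (lst v) = d" by (simp add: lst_def)
lemma lst_nth: "i < d \<Longrightarrow> lst v ! i = v i" by (simp add: lst_def)
lemma vec0: "vec x 0 = x ! 0" using d3 by (simp add: vec_def)
lemma vec_inj: "length x = d \<Longrightarrow> length y = d \<Longrightarrow> vec x = vec y \<Longrightarrow> x = y"
  by (metis lst_vec)

lemma mu_vec: "length x = d \<Longrightarrow> length y = d \<Longrightarrow> mu (vec x - vec y) = (time x y)^2 - space2 d x y"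
  unfolding mu_expand space2_def time_def using d3 by (simp add: vec_def)

lemma exists_null:
  assumes wV: "w \<in> VV" and wnz: "w \<noteq> 0"
  shows "\<exists>n\<in>VV. mu n = 0 \<and> mu (w - n) \<noteq> 0"
proof (rule ccontr)
  assume h: "\<not> (\<exists>n\<in>VV. mu n = 0 \<and> mu (w - n) \<noteq> 0)"
  have mw: "mu w = 0" using h by (metis VV_zero diff_zero mu_zero)
  have B0: "BB w (nn j s) = 0" if j: "1 \<le> j" "j < d" and s: "s \<in> {1, -1}" for j s
  proof -
    have "mu (w - nn j s) = 0" using h mu_nn[OF j s] VV_nn j by auto
    then show ?thesis using mw mu_nn[OF j s] by (simp add: mu_diff)
  qed
  have Bform: "BB w (nn j s) = w 0 - s * w j" if "1 \<le> j" "j < d" for j s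
    using that by (simp add: nn_def BB_lin)
  have w0: "w 0 = 0"
  proof -
    have "w 0 - w 1 = 0" "w 0 + w 1 = 0" using B0[of 1 1] B0[of 1 "-1"] Bform[of 1] d3 by auto
    then show ?thesis by simp
  qed
  have "w = 0"
  proof (rule VV_eqI[OF wV VV_zero])
    fix i assume "i < d"
    show "w i = 0 i"
    proof (cases "i = 0")
      case True then show ?thesis using w0 by simp
    next
      case False
      then have "1 \<le> i" by simp
      then have "w 0 - w i = 0" using B0[of i 1] Bform[of i] \<open>i < d\<close> by auto
      then show ?thesis using w0 by simp
    qed
  qed
  then show False using wnz by simp
qed

lemma main_aux:
  fixes IOb :: "'b \<Rightarrow> bool" and Ph :: "'b \<Rightarrow> 'b \<Rightarrow> bool"
    and W :: "'b \<Rightarrow> 'b \<Rightarrow> 'q::linordered_field list \<Rightarrow> bool" and m k :: 'b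
  assumes SR: "SR d IOb Ph W" and Im: "IOb m" and Ik: "IOb k"
  shows "\<exists>P. poincare d P \<and> wvt d W m k = {(x, P x) | x. length x = d}"
proof -
  have SPR: "SPR_plus d IOb Ph W" and AL: "AxLight d IOb Ph W" and AE: "AxEv d IOb W"
    and AS: "AxSymD d IOb Ph W" using SR by (auto simp: SR_def)
  have d1: "1 \<le> d" and d2: "2 \<le> d" using d3 by auto
  define LL where "LL h x y \<longleftrightarrow> (\<exists>p b. Ph p b \<and> W h p x \<and> W h p y)" for h x y
  obtain m0 c where Im0: "IOb m0" and c0: "c > 0" and
    L0: "\<And>x y. length x = d \<Longrightarrow> length y = d \<Longrightarrow> LL m0 x y \<longleftrightarrow> space2 d x y = c^2 * (time x y)^2"
    using AL unfolding AxLight_def LL_def by blast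
  define zz :: "'q list" where "zz = replicate d 0"
  define oo :: "'q list" where "oo = 1 # 1 # replicate (d - 2) 0"
  have lzz: "length zz = d" and loo: "length oo = d" using d2 by (auto simp: zz_def oo_def)
  have "LL m0 zz oo" using conjunct2[OF AS[unfolded AxSymD_def], rule_format, OF Im0]
    unfolding LL_def zz_def oo_def .
  then have sp: "space2 d zz oo = c^2 * (time zz oo)^2" using L0 lzz loo by blast
  have oo_nth: "oo ! i = (if i \<le> 1 then 1 else 0)" if "i < d" for i
    using that d2 by (cases i; cases "i - 1") (auto simp: oo_def nth_Cons')
  have "space2 d zz oo = (\<Sum>i\<in>{1..<d}. if i = 1 then 1 else 0)"
    unfolding space2_def by (rule sum.cong) (auto simp: zz_def oo_nth)
  also have "\<dots> = 1" using d2 by simp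
  finally have "space2 d zz oo = 1" .
  moreover have "time zz oo = -1" using d2 oo_nth[of 0] by (simp add: time_def zz_def)
  ultimately have "c^2 = 1" using sp by simp
  then have "(c - 1) * (c + 1) = 0" by (simp add: algebra_simps power2_eq_square)
  moreover have "c + 1 \<noteq> 0" using c0 by simp
  ultimately have c1: "c = 1" by simp
  have light_gen: "\<And>h. IOb h \<Longrightarrow> \<forall>x y. length x = d \<and> length y = d \<longrightarrow> (LL h x y \<longleftrightarrow> space2 d x y = (time x y)^2)"
  proof -
    fix h assume Ih: "IOb h"
    have "sat IOb Ph W ((\<lambda>_. m0)(0 := m0)) (\<lambda>_. 0) (lightF d)"
      unfolding sat_lightF[OF d1] using L0 c1 by (simp add: LL_def)
    moreover have "sat IOb Ph W ((\<lambda>_. m0)(0 := m0)) (\<lambda>_. 0) (lightF d) \<longleftrightarrow> sat IOb Ph W ((\<lambda>_. m0)(0 := h)) (\<lambda>_. 0) (lightF d)"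
      using SPR[unfolded SPR_plus_def, THEN spec[of _ "lightF d"], THEN spec[of _ 0], THEN mp, OF conjI[OF wf_lightF fvB_lightF],
        THEN spec[of _ "\<lambda>_. m0"], THEN spec[of _ "\<lambda>_. 0"], THEN spec[of _ m0], THEN spec[of _ h], THEN mp, OF conjI[OF Im0 Ih]] .
    ultimately have "sat IOb Ph W ((\<lambda>_. m0)(0 := h)) (\<lambda>_. 0) (lightF d)" by blast
    then show "\<forall>x y. length x = d \<and> length y = d \<longrightarrow> (LL h x y \<longleftrightarrow> space2 d x y = (time x y)^2)"
      unfolding sat_lightF[OF d1] LL_def .
  qed
  have lightV: "LL h x y \<longleftrightarrow> mu (vec x - vec y) = 0" if "IOb h" "length x = d" "length y = d" for h x y
    using light_gen[OF that(1)] that mu_vec[of x y] by auto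
  have uniq: "y = y'" if Ih: "IOb h" and ly: "length y = d" and ly': "length y' = d"
    and e: "ev_eq W h y h y'" for h y y'
  proof (rule ccontr)
    assume ne: "y \<noteq> y'"
    define w where "w = vec y - vec y'"
    have wV: "w \<in> VV" by (simp add: w_def)
    have "w \<noteq> 0" using ne vec_inj[OF ly ly'] by (auto simp: w_def)
    then obtain n where nV: "n \<in> VV" and mn: "mu n = 0" and mwn: "mu (w - n) \<noteq> 0"
      using exists_null[OF wV] by blast
    define z where "z = lst (vec y - n)"
    have vz: "vec z = vec y - n" using nV by (simp add: z_def)
    have lz: "length z = d" by (simp add: z_def)
    have "LL h y z" using lightV[OF Ih ly lz] vz mn by simp
    then have "LL h y' z" using e by (auto simp: LL_def ev_eq_def)
    then have "mu (vec y' - vec z) = 0" using lightV[OF Ih ly' lz] by simp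
    moreover have "vec y' - vec z = - (w - n)" by (simp add: vz w_def)
    ultimately show False using mwn mu_minus[of "w - n"] by simp
  qed
  define f where "f x = (THE y. length y = d \<and> ev_eq W m x k y)" for x
  have f_prop: "length (f x) = d \<and> ev_eq W m x k (f x)" if lx: "length x = d" for x
  proof -
    obtain y where y: "length y = d" "ev_eq W m x k y" using AE Im Ik lx unfolding AxEv_def by blast
    have "\<And>y'. length y' = d \<and> ev_eq W m x k y' \<Longrightarrow> y' = y"
      using uniq[OF Ik] y by (auto simp: ev_eq_def)
    then have "\<exists>!y. length y = d \<and> ev_eq W m x k y" using y by blast
    then show ?thesis unfolding f_def by (rule theI')
  qed
  have f_uniq: "f x = y" if "length x = d" "length y = d" "ev_eq W m x k y" for x y
    using f_prop[OF that(1)] that uniq[OF Ik, of "f x" y] by (auto simp: ev_eq_def)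
  define F where "F v = vec (f (lst v))" for v
  have F_vec: "F (vec x) = vec (f x)" if "length x = d" for x using that by (simp add: F_def)
  interpret C: core d F
  proof unfold_locales
    fix x :: "nat \<Rightarrow> 'q" show "F x \<in> VV" by (simp add: F_def)
  next
    fix x y :: "nat \<Rightarrow> 'q" assume xV: "x \<in> VV" and yV: "y \<in> VV" and e: "F x = F y"
    have "vec (f (lst x)) = vec (f (lst y))" using e by (simp add: F_def)
    then have "f (lst x) = f (lst y)" using f_prop[of "lst x"] f_prop[of "lst y"] vec_inj[of "f (lst x)" "f (lst y)"] by simp
    then have "ev_eq W m (lst x) m (lst y)" using f_prop[of "lst x"] f_prop[of "lst y"] by (auto simp: ev_eq_def)
    then have "lst x = lst y" using uniq[OF Im] by simp
    then have "vec (lst x) = vec (lst y)" by simp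
    then show "x = y" using vec_lst[OF xV] vec_lst[OF yV] by simp
  next
    fix z :: "nat \<Rightarrow> 'q" assume zV: "z \<in> VV"
    have "\<exists>x. length x = d \<and> ev_eq W k (lst z) m x"
      using AE[unfolded AxEv_def, THEN spec[of _ k], THEN spec[of _ m], THEN spec[of _ "lst z"], THEN mp,
          OF conjI[OF Ik conjI[OF Im length_lst]]] .
    then obtain x where lx: "length x = d" and e: "ev_eq W k (lst z) m x" by blast
    have "f x = lst z" using f_uniq[OF lx] e by (auto simp: ev_eq_def)
    then have "F (vec x) = z" using F_vec[OF lx] zV by simp
    then show "\<exists>x\<in>VV. F x = z" using vec_V by blast
  next
    fix x y :: "nat \<Rightarrow> 'q" assume xV: "x \<in> VV" and yV: "y \<in> VV"
    have px: "length (f (lst x)) = d" "ev_eq W m (lst x) k (f (lst x))" using f_prop by auto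
    have py: "length (f (lst y)) = d" "ev_eq W m (lst y) k (f (lst y))" using f_prop by auto
    have "LL m (lst x) (lst y) \<longleftrightarrow> LL k (f (lst x)) (f (lst y))"
      using px py by (simp add: LL_def ev_eq_def)
    then show "mu (F x - F y) = 0 \<longleftrightarrow> mu (x - y) = 0"
      using lightV[OF Im, of "lst x" "lst y"] lightV[OF Ik, of "f (lst x)" "f (lst y)"] px py xV yV
      by (simp add: F_def)
  next
    fix x y :: "nat \<Rightarrow> 'q" assume xV: "x \<in> VV" and yV: "y \<in> VV" and e0: "x 0 = y 0" and e1: "F x 0 = F y 0"
    have px: "length (f (lst x)) = d" "ev_eq W m (lst x) k (f (lst x))" using f_prop by auto
    have py: "length (f (lst y)) = d" "ev_eq W m (lst y) k (f (lst y))" using f_prop by auto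
    have l0: "lst x ! 0 = lst y ! 0" using e0 d3 by (simp add: lst_nth)
    have f0: "f (lst x) ! 0 = f (lst y) ! 0" using e1 by (simp add: F_def vec0)
    have "space2 d (lst x) (lst y) = space2 d (f (lst x)) (f (lst y))"
      using conjunct1[OF AS[unfolded AxSymD_def], rule_format, of m k "lst x" "lst y" "f (lst x)" "f (lst y)"]
        Im Ik px py l0 f0 by simp
    moreover have "mu (F x - F y) = (time (f (lst x)) (f (lst y)))^2 - space2 d (f (lst x)) (f (lst y))"
      using mu_vec px py by (simp add: F_def)
    moreover have "mu (x - y) = (time (lst x) (lst y))^2 - space2 d (lst x) (lst y)"
      using mu_vec[of "lst x" "lst y"] xV yV by simp
    moreover have "time (lst x) (lst y) = 0" using l0 by (simp add: time_def)
    moreover have "time (f (lst x)) (f (lst y)) = 0" using f0 by (simp add: time_def)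
    ultimately show "mu (F x - F y) = mu (x - y)" by simp
  qed
  have wvt_eq: "wvt d W m k = {(x, f x) | x. length x = d}"
  proof (rule set_eqI)
    fix p show "p \<in> wvt d W m k \<longleftrightarrow> p \<in> {(x, f x) | x. length x = d}"
    proof (cases p)
      case (Pair x y)
      show ?thesis
      proof
        assume "p \<in> wvt d W m k"
        then have "length x = d" "length y = d" "ev_eq W m x k y" using Pair by (auto simp: wvt_def)
        then show "p \<in> {(x, f x) | x. length x = d}" using f_uniq Pair by auto
      next
        assume "p \<in> {(x, f x) | x. length x = d}"
        then show "p \<in> wvt d W m k" using f_prop Pair by (auto simp: wvt_def)
      qed
    qed
  qed
  have aff: "affine_map d f"
    unfolding affine_map_def
  proof (intro exI allI impI)
    fix x :: "'q list" assume lx: "length x = d"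
    have "f x = lst (vec (f x))" using f_prop[OF lx] by simp
    also have "\<dots> = lst (F (vec x))" using F_vec[OF lx] by simp
    also have "\<dots> = lst (F 0 + (\<Sum>i<d. sc (vec x i) (C.G (ee i))))" using C.core_main(2)[of "vec x"] by simp
    also have "\<dots> = map (\<lambda>i. F 0 i + (\<Sum>j<d. C.G (ee j) i * x ! j)) [0..<d]"
      unfolding lst_def
    proof (rule map_cong[OF refl])
      fix i assume "i \<in> set [0..<d]"
      have "(\<Sum>j<d. sc (vec x j) (C.G (ee j)) i) = (\<Sum>j<d. C.G (ee j) i * x ! j)"
        by (rule sum.cong) (auto simp: vec_def mult.commute)
      then show "(F 0 + (\<Sum>j<d. sc (vec x j) (C.G (ee j)))) i = F 0 i + (\<Sum>j<d. C.G (ee j) i * x ! j)"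
        by (simp add: sum_fun_apply)
    qed
    finally show "f x = map (\<lambda>i. F 0 i + (\<Sum>j<d. (\<lambda>i j. C.G (ee j) i) i j * x ! j)) [0..<d]" by simp
  qed
  have bij: "bij_betw f {x. length x = d} {x. length x = d}"
    unfolding bij_betw_def
  proof
    show "inj_on f {x. length x = d}"
    proof (rule inj_onI)
      fix x y assume lx: "x \<in> {x. length x = d}" and ly: "y \<in> {x. length x = d}" and e: "f x = f y"
      then have "F (vec x) = F (vec y)" using F_vec by simp
      then have "vec x = vec y" using C.F_inj by simp
      then show "x = y" using vec_inj lx ly by simp
    qed
    show "f ` {x. length x = d} = {x. length x = d}"
    proof
      show "f ` {x. length x = d} \<subseteq> {x. length x = d}" using f_prop by auto
      show "{x. length x = d} \<subseteq> f ` {x. length x = d}"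
      proof
        fix y :: "'q list" assume "y \<in> {x. length x = d}"
        then have ly: "length y = d" by simp
        obtain v where vV: "v \<in> VV" and Fv: "F v = vec y" using C.F_surj[of "vec y"] by auto
        have "f (lst v) = lst (F v)" by (simp add: F_def f_prop)
        also have "\<dots> = y" using Fv ly by simp
        finally have fy: "f (lst v) = y" .
        show "y \<in> f ` {x. length x = d}" by (rule image_eqI[of y f "lst v"]) (use fy in simp_all)
      qed
    qed
  qed
  have isom: "(time x y)^2 - space2 d x y = (time (f x) (f y))^2 - space2 d (f x) (f y)"
    if "length x = d \<and> length y = d" for x y
  proof -
    have "(time x y)^2 - space2 d x y = mu (vec x - vec y)" using mu_vec[of x y] that by simp
    also have "\<dots> = mu (F (vec x) - F (vec y))" using C.core_main(1)[of "vec x" "vec y"] by simp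
    also have "\<dots> = mu (vec (f x) - vec (f y))" using F_vec that by simp
    also have "\<dots> = (time (f x) (f y))^2 - space2 d (f x) (f y)" using mu_vec[of "f x" "f y"] f_prop that by simp
    finally show ?thesis .
  qed
  have "poincare d f" unfolding poincare_def using aff bij isom by blast
  then show ?thesis using wvt_eq by blast
qed

end

theorem corollary3p6:
  fixes d :: nat
    and IOb :: "'b \<Rightarrow> bool"
    and Ph :: "'b \<Rightarrow> 'b \<Rightarrow> bool"
    and W :: "'b \<Rightarrow> 'b \<Rightarrow> 'q::linordered_field list \<Rightarrow> bool"
    and m k :: 'b
  assumes "d \<ge> 3"
    and "SR d IOb Ph W"
    and "IOb m" and "IOb k"
  shows "\<exists>P. poincare d P \<and> wvt d W m k = {(x, P x) | x. length x = d}"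
proof -
  interpret VS d by unfold_locales (rule assms(1))
  show ?thesis by (rule main_aux[OF assms(2-4)])
qed


end
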